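(* Every two-qubit unitary operation is deterministically implementable over the grail network.
   Context: The grail network has nodes $i_1,i_2,n_1,n_2,n_3,n_4,o_1,o_2$ and nine edges: $\{i_1,n_1\}$, $\{n_4,o_2\}$, and the edges of a $(2,3)$-cluster network on the rows $(n_1,n_2,o_1)$ and $(i_2,n_3,n_4)$, namely $\{n_1,n_2\},\{n_2,o_1\},\{i_2,n_3\},\{n_3,n_4\},\{n_1,i_2\},\{n_2,n_3\},\{o_1,n_4\}$. The resource state is the tensor product over all edges of an EPR pair $(|00\rangle+|11\rangle)/\sqrt2$ with one qubit at each endpoint; classical communication between any nodes is unrestricted. Input qubits are at $i_1,i_2$ and output qubits at $o_1,o_2$. A two-qubit unitary $U$ is deterministically implementable if some LOCC map (local operations at single nodes with unrestricted classical communication) maps $|\psi\rangle\langle\psi|\otimes|\Phi\rangle\langle\Phi|_{\mathcal R}$ to $U|\psi\rangle\langle\psi|U^\dagger$ on the output qubits for every pure input $|\psi\rangle$. *)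

theory Defs
  imports Complex_Main "Jordan_Normal_Form.Schur_Decomposition"
begin

text \<open>Nodes: i1 = 0, i2 = 1, n1 = 2, n2 = 3, n3 = 4, n4 = 5, o1 = 6, o2 = 7.
  Each node v carries a finite-dimensional local space C^(D v) with basis 0..D v - 1.
  A global basis vector is a configuration c : node => local basis index
  (with c v = 0 for v >= 8).  Operators on the global space are functions
  cfg => cfg => complex (matrix entries); only entries at valid configurations matter.\<close>

type_synonym cfg = "nat \<Rightarrow> nat"
type_synonym op = "cfg \<Rightarrow> cfg \<Rightarrow> complex"

definition num_nodes :: nat where "num_nodes = 8"

definition configs :: "(nat \<Rightarrow> nat) \<Rightarrow> cfg set" where
  "configs D = {c. (\<forall>v<num_nodes. c v < D v) \<and> (\<forall>v. num_nodes \<le> v \<longrightarrow> c v = 0)}"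

text \<open>Conjugation rho |-> (I \<otimes> K \<otimes> I) rho (I \<otimes> K \<otimes> I)^dagger, with K acting on node u,
  K a (dim_row K) x (dim_col K) matrix mapping C^(dim_col K) to C^(dim_row K).\<close>

definition kraus_apply :: "nat \<Rightarrow> complex mat \<Rightarrow> op \<Rightarrow> op" where
  "kraus_apply u K \<rho> = (\<lambda>c c'. \<Sum>a<dim_col K. \<Sum>b<dim_col K.
       K $$ (c u, a) * \<rho> (c(u := a)) (c'(u := b)) * cnj (K $$ (c' u, b)))"

text \<open>Finite-round LOCC protocols.  locc D D' \<Lambda> means: \<Lambda> is the (outcome-summed) map of
  a protocol that starts with local dimensions D and ends (on every branch) with local
  dimensions D'.  A round: some node u performs a local instrument with Kraus operators
  K j (j < m), K j : C^(D u) -> C^(n j) (ancillas / discarding are covered by the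
  dimension change), satisfying completeness; the outcome j is broadcast and the
  remaining protocol \<Lambda> j may depend on it.\<close>

inductive locc :: "(nat \<Rightarrow> nat) \<Rightarrow> (nat \<Rightarrow> nat) \<Rightarrow> (op \<Rightarrow> op) \<Rightarrow> bool" where
  locc_id: "locc D D (\<lambda>\<rho>. \<rho>)"
| locc_step: "\<lbrakk> u < num_nodes;
     \<forall>j<(m::nat). K j \<in> carrier_mat (n j) (D u);
     \<forall>a<D u. \<forall>b<D u. (\<Sum>j<m. \<Sum>i<n j. cnj (K j $$ (i, a)) * K j $$ (i, b))
                        = (if a = b then 1 else 0);
     \<forall>j<m. locc (D(u := n j)) D' (\<Lambda> j) \<rbrakk>
   \<Longrightarrow> locc D D' (\<lambda>\<rho> c c'. \<Sum>j<m. \<Lambda> j (kraus_apply u (K j) \<rho>) c c')"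

text \<open>Edges (as pairs of nodes), in the order
  {i1,n1}, {n4,o2}, {n1,n2}, {n2,o1}, {i2,n3}, {n3,n4}, {n1,i2}, {n2,n3}, {o1,n4}.\<close>

definition grail_edges :: "(nat \<times> nat) list" where
  "grail_edges = [(0,2), (5,7), (2,3), (3,6), (1,4), (4,5), (2,1), (3,4), (6,5)]"

datatype qlabel = InQ | EdgeQ nat

definition node_qubits :: "nat \<Rightarrow> qlabel list" where
  "node_qubits v = (if v = 0 \<or> v = 1 then [InQ] else [])
     @ [EdgeQ e. e \<leftarrow> [0..<length grail_edges],
                 v = fst (grail_edges ! e) \<or> v = snd (grail_edges ! e)]"

definition D0 :: "nat \<Rightarrow> nat" where
  "D0 v = (if v < num_nodes then 2 ^ length (node_qubits v) else 1)"

text \<open>Bit value of qubit l at node v in configuration c (qubit at position p of the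
  node's list is binary digit p of the local index).\<close>

definition qbit :: "cfg \<Rightarrow> nat \<Rightarrow> qlabel \<Rightarrow> nat" where
  "qbit c v l = (c v div 2 ^ length (takeWhile (\<lambda>x. x \<noteq> l) (node_qubits v))) mod 2"

text \<open>Amplitude of |psi> (on i1,i2; index 2*bit(i1) + bit(i2)) tensor the EPR pairs.\<close>

definition init_amp :: "complex vec \<Rightarrow> cfg \<Rightarrow> complex" where
  "init_amp \<psi> c = \<psi> $ (2 * qbit c 0 InQ + qbit c 1 InQ) *
     (\<Prod>e<length grail_edges.
        if qbit c (fst (grail_edges ! e)) (EdgeQ e) = qbit c (snd (grail_edges ! e)) (EdgeQ e)
        then complex_of_real (1 / sqrt 2) else 0)"

definition rho0 :: "complex vec \<Rightarrow> op" where
  "rho0 \<psi> = (\<lambda>c c'. init_amp \<psi> c * cnj (init_amp \<psi> c'))"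

text \<open>Output: o1 (node 6) and o2 (node 7) hold one qubit each; all other systems discarded.\<close>

definition Dout :: "nat \<Rightarrow> nat" where
  "Dout v = (if v = 6 \<or> v = 7 then 2 else 1)"

definition out_idx :: "cfg \<Rightarrow> nat" where
  "out_idx c = 2 * c 6 + c 7"

definition unitary_mat :: "complex mat \<Rightarrow> nat \<Rightarrow> bool" where
  "unitary_mat U n \<longleftrightarrow> U \<in> carrier_mat n n \<and> mat_adjoint U * U = 1\<^sub>m n"

definition det_implementable :: "complex mat \<Rightarrow> bool" where
  "det_implementable U \<longleftrightarrow> (\<exists>\<Lambda>. locc D0 Dout \<Lambda> \<and>
     (\<forall>\<psi>. dim_vec \<psi> = 4 \<longrightarrow> (\<Sum>i<4. (cmod (\<psi> $ i))\<^sup>2) = 1 \<longrightarrow>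
        (\<forall>c\<in>configs Dout. \<forall>c'\<in>configs Dout.
           \<Lambda> (rho0 \<psi>) c c' = (U *\<^sub>v \<psi>) $ out_idx c * cnj ((U *\<^sub>v \<psi>) $ out_idx c'))))"

end

theory Submission
  imports Defs
begin

definition pure :: "(cfg \<Rightarrow> complex) \<Rightarrow> op" where
  "pure f = (\<lambda>c c'. f c * cnj (f c'))"

definition lapply :: "nat \<Rightarrow> complex mat \<Rightarrow> (cfg \<Rightarrow> complex) \<Rightarrow> cfg \<Rightarrow> complex" where
  "lapply u K f = (\<lambda>c. \<Sum>a<dim_col K. K $$ (c u, a) * f (c(u := a)))"

lemma kraus_pure: "kraus_apply u K (pure f) = pure (lapply u K f)"
proof (intro ext)
  fix c c'
  show "kraus_apply u K (pure f) c c' = pure (lapply u K f) c c'"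
    unfolding kraus_apply_def pure_def lapply_def
    by (simp add: sum_distrib_left sum_distrib_right mult_ac) (rule sum.swap)
qed

lemma locc_cong0:
  "locc D D' \<Lambda> \<Longrightarrow> \<forall>\<rho>1 \<rho>2 :: op. (\<forall>c\<in>configs D. \<forall>c'\<in>configs D. \<rho>1 c c' = \<rho>2 c c') \<longrightarrow>
     (\<forall>c\<in>configs D'. \<forall>c'\<in>configs D'. \<Lambda> \<rho>1 c c' = \<Lambda> \<rho>2 c c')"
proof (induction rule: locc.induct)
  case (locc_id D)
  then show ?case by auto
next
  case (locc_step u m K n D D' \<Lambda>)
  show ?case
  proof (intro allI impI ballI)
    fix \<rho>1 \<rho>2 :: op and c c'
    assume E: "\<forall>c\<in>configs D. \<forall>c'\<in>configs D. \<rho>1 c c' = \<rho>2 c c'"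
      and c0: "c \<in> configs D'" and c0': "c' \<in> configs D'"
    have "\<Lambda> j (kraus_apply u (K j) \<rho>1) c c' = \<Lambda> j (kraus_apply u (K j) \<rho>2) c c'" if j: "j < m" for j
    proof -
      have "\<forall>c\<in>configs (D(u := n j)). \<forall>c'\<in>configs (D(u := n j)).
          kraus_apply u (K j) \<rho>1 c c' = kraus_apply u (K j) \<rho>2 c c'"
      proof (intro ballI)
        fix c c' assume c: "c \<in> configs (D(u := n j))" and c': "c' \<in> configs (D(u := n j))"
        have dc: "dim_col (K j) = D u" using locc_step.hyps(2) j by auto
        have mem: "x(u := a) \<in> configs D" if "x \<in> configs (D(u := n j))" "a < D u" for x a
          using that locc_step.hyps(1) unfolding configs_def num_nodes_def
          by (auto split: if_splits)
        show "kraus_apply u (K j) \<rho>1 c c' = kraus_apply u (K j) \<rho>2 c c'"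
          unfolding kraus_apply_def dc
          using E mem[OF c] mem[OF c'] by (intro sum.cong refl) auto
      qed
      then show ?thesis using locc_step.IH j c0 c0' by blast
    qed
    then show "(\<lambda>\<rho> c c'. \<Sum>j<m. \<Lambda> j (kraus_apply u (K j) \<rho>) c c') \<rho>1 c c' =
               (\<lambda>\<rho> c c'. \<Sum>j<m. \<Lambda> j (kraus_apply u (K j) \<rho>) c c') \<rho>2 c c'" by simp
  qed
qed

lemma locc_cong:
  assumes "locc D D' \<Lambda>" "\<forall>c\<in>configs D. \<forall>c'\<in>configs D. \<rho>1 c c' = \<rho>2 c c'"
    "c \<in> configs D'" "c' \<in> configs D'"
  shows "\<Lambda> \<rho>1 c c' = \<Lambda> \<rho>2 c c'"
  using locc_cong0[OF assms(1)] assms(2-4) by blast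

fun prot :: "(nat \<Rightarrow> nat) \<Rightarrow> (nat \<Rightarrow> (nat \<Rightarrow> nat) \<Rightarrow> nat \<Rightarrow> complex mat) \<Rightarrow> nat \<Rightarrow> nat \<Rightarrow> (nat \<Rightarrow> nat) \<Rightarrow> op \<Rightarrow> op" where
  "prot M Kr 0 v h = (\<lambda>\<rho>. \<rho>)"
| "prot M Kr (Suc n) v h = (\<lambda>\<rho> c c'. \<Sum>j<M v. prot M Kr n (Suc v) (h(v := j)) (kraus_apply v (Kr v h j) \<rho>) c c')"

definition Dv :: "nat \<Rightarrow> nat \<Rightarrow> nat" where
  "Dv v = (\<lambda>w. if w < v then Dout w else D0 w)"

lemma Dv_8: "Dv 8 = Dout"
  by (auto simp: Dv_def Dout_def D0_def num_nodes_def)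

lemma Dv_0: "Dv 0 = D0"
  by (auto simp: Dv_def)

lemma Dv_upd: "(Dv v)(v := Dout v) = Dv (Suc v)"
  by (auto simp: Dv_def)

definition complete :: "nat \<Rightarrow> nat \<Rightarrow> nat \<Rightarrow> (nat \<Rightarrow> complex mat) \<Rightarrow> bool" where
  "complete m d d' K \<longleftrightarrow> (\<forall>j<m. K j \<in> carrier_mat d' d) \<and>
     (\<forall>a<d. \<forall>b<d. (\<Sum>j<m. \<Sum>i<d'. cnj (K j $$ (i, a)) * K j $$ (i, b)) = (if a = b then 1 else 0))"

lemma prot_locc:
  assumes C: "\<forall>v<8. \<forall>h. complete (M v) (D0 v) (Dout v) (Kr v h)"
  shows "n + v = 8 \<Longrightarrow> locc (Dv v) Dout (prot M Kr n v h)"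
proof (induction n arbitrary: v h)
  case 0
  then show ?case using locc_id[of Dout] by (simp add: Dv_8)
next
  case (Suc n)
  have v: "v < 8" using Suc by simp
  have c: "complete (M v) (D0 v) (Dout v) (Kr v h)" using C v by blast
  have Dvv: "Dv v v = D0 v" by (simp add: Dv_def)
  have "locc (Dv v) Dout (\<lambda>\<rho> c c'. \<Sum>j<M v. prot M Kr n (Suc v) (h(v := j)) (kraus_apply v (Kr v h j) \<rho>) c c')"
  proof (rule locc_step[where n = "\<lambda>_. Dout v"])
    show "v < num_nodes" using v by (simp add: num_nodes_def)
    show "\<forall>j<M v. Kr v h j \<in> carrier_mat (Dout v) (Dv v v)" using c by (simp add: complete_def Dvv)
    show "\<forall>a<Dv v v. \<forall>b<Dv v v. (\<Sum>j<M v. \<Sum>i<Dout v. cnj (Kr v h j $$ (i, a)) * Kr v h j $$ (i, b)) = (if a = b then 1 else 0)"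
      using c by (simp add: complete_def Dvv)
    show "\<forall>j<M v. locc ((Dv v)(v := Dout v)) Dout (prot M Kr n (Suc v) (h(v := j)))"
      using Suc.IH[of "Suc v"] Suc.prems by (simp add: Dv_upd)
  qed
  then show ?case by simp
qed

lemma prot_eval:
  assumes C: "\<forall>v<8. \<forall>h. complete (M v) (D0 v) (Dout v) (Kr v h)"
    and S: "\<And>v h j c. v < 8 \<Longrightarrow> j < M v \<Longrightarrow> c \<in> configs (Dv (Suc v)) \<Longrightarrow>
              lapply v (Kr v h j) (\<Psi> v h) c = \<Psi> (Suc v) (h(v := j)) c"
    and F: "\<And>h c. c \<in> configs Dout \<Longrightarrow> \<Psi> 8 h c = g * T c"
  shows "n + v = 8 \<Longrightarrow> c \<in> configs Dout \<Longrightarrow> c' \<in> configs Dout \<Longrightarrow>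
     prot M Kr n v h (pure (\<Psi> v h)) c c' = (\<Prod>w\<in>{v..<8}. of_nat (M w)) * (g * cnj g) * (T c * cnj (T c'))"
proof (induction n arbitrary: v h)
  case 0
  then show ?case using F by (simp add: pure_def mult_ac)
next
  case (Suc n)
  have v: "v < 8" using Suc by simp
  have "prot M Kr (Suc n) v h (pure (\<Psi> v h)) c c'
      = (\<Sum>j<M v. prot M Kr n (Suc v) (h(v := j)) (pure (lapply v (Kr v h j) (\<Psi> v h))) c c')"
    by (simp add: kraus_pure)
  also have "\<dots> = (\<Sum>j<M v. prot M Kr n (Suc v) (h(v := j)) (pure (\<Psi> (Suc v) (h(v := j)))) c c')"
  proof (intro sum.cong refl)
    fix j assume j: "j \<in> {..<M v}"
    show "prot M Kr n (Suc v) (h(v := j)) (pure (lapply v (Kr v h j) (\<Psi> v h))) c c' =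
          prot M Kr n (Suc v) (h(v := j)) (pure (\<Psi> (Suc v) (h(v := j)))) c c'"
      using Suc.prems S[OF v] j
      by (intro locc_cong[OF prot_locc[OF C, of n "Suc v" "h(v := j)"]]) (auto simp: pure_def)
  qed
  also have "\<dots> = (\<Sum>j<M v. (\<Prod>w\<in>{Suc v..<8}. of_nat (M w)) * (g * cnj g) * (T c * cnj (T c')))"
    using Suc.IH Suc.prems by simp
  also have "\<dots> = (\<Prod>w\<in>{v..<8}. of_nat (M w)) * (g * cnj g) * (T c * cnj (T c'))"
    using v by (simp add: prod.atLeast_Suc_lessThan)
  finally show ?case .
qed

declare One_nat_def [simp del]

definition B :: "cfg \<Rightarrow> nat \<Rightarrow> nat \<Rightarrow> nat" where "B c w p = c w div 2 ^ p mod 2"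
definition r :: complex where "r = complex_of_real (1 / sqrt 2)"
definition ep :: "nat \<Rightarrow> nat \<Rightarrow> complex" where "ep x y = (if x = y then r else 0)"

lemma nq: "node_qubits 0 = [InQ, EdgeQ 0]" "node_qubits 1 = [InQ, EdgeQ 4, EdgeQ 6]"
  "node_qubits 2 = [EdgeQ 0, EdgeQ 2, EdgeQ 6]" "node_qubits 3 = [EdgeQ 2, EdgeQ 3, EdgeQ 7]"
  "node_qubits 4 = [EdgeQ 4, EdgeQ 5, EdgeQ 7]" "node_qubits 5 = [EdgeQ 1, EdgeQ 5, EdgeQ 8]"
  "node_qubits 6 = [EdgeQ 3, EdgeQ 8]" "node_qubits 7 = [EdgeQ 1]"
  by (simp_all add: node_qubits_def grail_edges_def upt_rec One_nat_def)

lemma ge: "grail_edges ! 0 = (0,2)" "grail_edges ! 1 = (5,7)" "grail_edges ! 2 = (2,3)"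
  "grail_edges ! 3 = (3,6)" "grail_edges ! 4 = (1,4)" "grail_edges ! 5 = (4,5)"
  "grail_edges ! 6 = (2,1)" "grail_edges ! 7 = (3,4)" "grail_edges ! 8 = (6,5)" "length grail_edges = 9"
  by (simp_all add: grail_edges_def)

lemma prod9: "(\<Prod>e<(9::nat). f e) = f 0 * f 1 * f 2 * f 3 * f 4 * f 5 * f 6 * f 7 * (f 8::complex)"
  by (simp add: lessThan_Suc numeral_eq_Suc One_nat_def)

definition S0 :: "(nat \<Rightarrow> nat \<Rightarrow> complex) \<Rightarrow> cfg \<Rightarrow> complex" where
  "S0 F c = F (B c 0 0) (B c 1 0) * ep (B c 0 1) (B c 2 0) * ep (B c 5 0) (B c 7 0) * ep (B c 2 1) (B c 3 0)
     * ep (B c 3 1) (B c 6 0) * ep (B c 1 1) (B c 4 0) * ep (B c 4 1) (B c 5 1) * ep (B c 2 2) (B c 1 2)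
     * ep (B c 3 2) (B c 4 2) * ep (B c 6 1) (B c 5 2)"

lemma qb: "qbit c 0 InQ = B c 0 0" "qbit c 0 (EdgeQ 0) = B c 0 1"
  "qbit c 1 InQ = B c 1 0" "qbit c 1 (EdgeQ 4) = B c 1 1" "qbit c 1 (EdgeQ 6) = B c 1 2"
  "qbit c 2 (EdgeQ 0) = B c 2 0" "qbit c 2 (EdgeQ 2) = B c 2 1" "qbit c 2 (EdgeQ 6) = B c 2 2"
  "qbit c 3 (EdgeQ 2) = B c 3 0" "qbit c 3 (EdgeQ 3) = B c 3 1" "qbit c 3 (EdgeQ 7) = B c 3 2"
  "qbit c 4 (EdgeQ 4) = B c 4 0" "qbit c 4 (EdgeQ 5) = B c 4 1" "qbit c 4 (EdgeQ 7) = B c 4 2"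
  "qbit c 5 (EdgeQ 1) = B c 5 0" "qbit c 5 (EdgeQ 5) = B c 5 1" "qbit c 5 (EdgeQ 8) = B c 5 2"
  "qbit c 6 (EdgeQ 3) = B c 6 0" "qbit c 6 (EdgeQ 8) = B c 6 1" "qbit c 7 (EdgeQ 1) = B c 7 0"
  by (simp_all add: qbit_def nq B_def)

lemma ep_eq: "(if x = y then complex_of_real (1 / sqrt 2) else 0) = ep x y"
  by (simp add: ep_def r_def)

lemma init_S0: "init_amp \<psi> c = S0 (\<lambda>a b. \<psi> $ (2 * a + b)) c"
  unfolding init_amp_def S0_def
  by (simp only: prod9 ge fst_conv snd_conv qb ep_eq mult.assoc)

lemma sum2: "(\<Sum>a<(2::nat). f a) = f 0 + (f 1 :: complex)"
  by (simp add: numeral_eq_Suc One_nat_def)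
lemma sum4: "(\<Sum>a<(4::nat). f a) = f 0 + f 1 + f 2 + (f 3 :: complex)"
  by (simp add: numeral_eq_Suc lessThan_Suc One_nat_def)
lemma sum8: "(\<Sum>a<(8::nat). f a) = f 0 + f 1 + f 2 + f 3 + f 4 + f 5 + f 6 + (f 7 :: complex)"
  by (simp add: numeral_eq_Suc lessThan_Suc One_nat_def)

lemma B_upd: "B (c(v := a)) w p = (if w = v then a div 2 ^ p mod 2 else B c w p)"
  by (simp add: B_def)

lemma B_upd': "B (c(v := a)) w 0 = (if w = v then a mod 2 else B c w 0)"
  "B (c(v := a)) w 1 = (if w = v then a div 2 mod 2 else B c w 1)"
  "B (c(v := a)) w 2 = (if w = v then a div 4 mod 2 else B c w 2)"
  by (simp_all add: B_def)

lemma B_cases: "B c w p = 0 \<or> B c w p = 1"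
  by (simp add: B_def) arith

definition S1 :: "(nat \<Rightarrow> nat \<Rightarrow> complex) \<Rightarrow> cfg \<Rightarrow> complex" where
  "S1 F c = F (B c 2 0) (B c 1 0) * ep (B c 5 0) (B c 7 0) * ep (B c 2 1) (B c 3 0)
     * ep (B c 3 1) (B c 6 0) * ep (B c 1 1) (B c 4 0) * ep (B c 4 1) (B c 5 1) * ep (B c 2 2) (B c 1 2)
     * ep (B c 3 2) (B c 4 2) * ep (B c 6 1) (B c 5 2)"
definition S2 :: "(nat \<Rightarrow> nat \<Rightarrow> nat \<Rightarrow> complex) \<Rightarrow> cfg \<Rightarrow> complex" where
  "S2 F c = F (B c 2 0) (B c 2 2) (B c 4 0) * ep (B c 5 0) (B c 7 0) * ep (B c 2 1) (B c 3 0)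
     * ep (B c 3 1) (B c 6 0) * ep (B c 4 1) (B c 5 1)
     * ep (B c 3 2) (B c 4 2) * ep (B c 6 1) (B c 5 2)"
definition S3 :: "(nat \<Rightarrow> nat \<Rightarrow> complex) \<Rightarrow> cfg \<Rightarrow> complex" where
  "S3 F c = F (B c 3 0) (B c 4 0) * ep (B c 5 0) (B c 7 0)
     * ep (B c 3 1) (B c 6 0) * ep (B c 4 1) (B c 5 1)
     * ep (B c 3 2) (B c 4 2) * ep (B c 6 1) (B c 5 2)"
definition S4 :: "(nat \<Rightarrow> nat \<Rightarrow> nat \<Rightarrow> complex) \<Rightarrow> cfg \<Rightarrow> complex" where
  "S4 F c = F (B c 6 0) (B c 4 2) (B c 4 0) * ep (B c 5 0) (B c 7 0)
     * ep (B c 4 1) (B c 5 1) * ep (B c 6 1) (B c 5 2)"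
definition S5 :: "(nat \<Rightarrow> nat \<Rightarrow> complex) \<Rightarrow> cfg \<Rightarrow> complex" where
  "S5 F c = F (B c 6 0) (B c 5 1) * ep (B c 5 0) (B c 7 0) * ep (B c 6 1) (B c 5 2)"
definition S6 :: "(nat \<Rightarrow> nat \<Rightarrow> nat \<Rightarrow> complex) \<Rightarrow> cfg \<Rightarrow> complex" where
  "S6 F c = F (B c 6 0) (B c 6 1) (B c 7 0)"
definition S7 :: "(nat \<Rightarrow> nat \<Rightarrow> complex) \<Rightarrow> cfg \<Rightarrow> complex" where
  "S7 F c = F (c 6) (B c 7 0)"
definition S8 :: "(nat \<Rightarrow> nat \<Rightarrow> complex) \<Rightarrow> cfg \<Rightarrow> complex" where
  "S8 F c = F (c 6) (c 7)"

lemma ep_simps: "ep 0 0 = r" "ep 1 1 = r" "ep 0 1 = 0" "ep 1 0 = 0"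
  by (simp_all add: ep_def)

lemma st0: "(\<Sum>a<4. t (a mod 2) (a div 2 mod 2) (a div 4 mod 2) * S0 F (c(0 := a)))
   = r * S1 (\<lambda>x0 b. \<Sum>a<2. t a x0 0 * F a b) c"
  using B_cases[of c 2 0]
  by (elim disjE) (simp_all add: sum4 sum2 S0_def S1_def B_upd' ep_simps algebra_simps)

lemma st1: "(\<Sum>a<8. t (a mod 2) (a div 2 mod 2) (a div 4 mod 2) * S1 F (c(1 := a)))
   = r * r * S2 (\<lambda>x0 x6 x4. \<Sum>b<2. t b x4 x6 * F x0 b) c"
  using B_cases[of c 4 0] B_cases[of c 2 2]
  by (elim disjE) (simp_all add: sum8 sum2 S1_def S2_def B_upd' ep_simps algebra_simps)

lemma st2: "(\<Sum>a<8. t (a mod 2) (a div 2 mod 2) (a div 4 mod 2) * S2 F (c(2 := a)))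
   = r * S3 (\<lambda>x2 x4. \<Sum>x0<2. \<Sum>x6<2. t x0 x2 x6 * F x0 x6 x4) c"
  using B_cases[of c 3 0]
  by (elim disjE) (simp_all add: sum8 sum2 S2_def S3_def B_upd' ep_simps algebra_simps)

lemma st3: "(\<Sum>a<8. t (a mod 2) (a div 2 mod 2) (a div 4 mod 2) * S3 F (c(3 := a)))
   = r * r * S4 (\<lambda>x3 x7 x4. \<Sum>x2<2. t x2 x3 x7 * F x2 x4) c"
  using B_cases[of c 6 0] B_cases[of c 4 2]
  by (elim disjE) (simp_all add: sum8 sum2 S3_def S4_def B_upd' ep_simps algebra_simps)

lemma st4: "(\<Sum>a<8. t (a mod 2) (a div 2 mod 2) (a div 4 mod 2) * S4 F (c(4 := a)))
   = r * S5 (\<lambda>x3 x5. \<Sum>x4<2. \<Sum>x7<2. t x4 x5 x7 * F x3 x7 x4) c"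
  using B_cases[of c 5 1]
  by (elim disjE) (simp_all add: sum8 sum2 S4_def S5_def B_upd' ep_simps algebra_simps)

lemma st5: "(\<Sum>a<8. t (a mod 2) (a div 2 mod 2) (a div 4 mod 2) * S5 F (c(5 := a)))
   = r * r * S6 (\<lambda>x3 x8 x1. \<Sum>x5<2. t x1 x5 x8 * F x3 x5) c"
  using B_cases[of c 7 0] B_cases[of c 6 1]
  by (elim disjE) (simp_all add: sum8 sum2 S5_def S6_def B_upd' ep_simps algebra_simps)

lemma st6: "(\<Sum>a<4. t (a mod 2) (a div 2 mod 2) (a div 4 mod 2) * S6 F (c(6 := a)))
   = S7 (\<lambda>y1 x1. \<Sum>x3<2. \<Sum>x8<2. t x3 x8 0 * F x3 x8 x1) c"
  by (simp add: sum4 sum2 S6_def S7_def B_upd' algebra_simps)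

lemma st7: "(\<Sum>a<2. t (a mod 2) (a div 2 mod 2) (a div 4 mod 2) * S7 F (c(7 := a)))
   = S8 (\<lambda>y1 y2. \<Sum>x1<2. t x1 0 0 * F y1 x1) c"
  by (simp add: sum2 S7_def S8_def B_upd' algebra_simps)

definition xr :: "nat \<Rightarrow> nat \<Rightarrow> nat" where "xr x y = (x + y) mod 2"
definition sg :: "nat \<Rightarrow> complex" where "sg n = (if even n then 1 else -1)"
definition pz :: "nat \<Rightarrow> nat \<Rightarrow> nat \<Rightarrow> complex" where
  "pz k x q = (if x = xr q (k mod 2) then sg (k div 2 * q) else 0)"
definition ind :: "bool \<Rightarrow> complex" where "ind P = (if P then 1 else 0)"

type_synonym fam = "nat \<Rightarrow> nat \<Rightarrow> nat \<Rightarrow> complex"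

definition t0 :: "(nat \<Rightarrow> nat) \<Rightarrow> nat \<Rightarrow> nat \<Rightarrow> complex" where
  "t0 h a x0 = pz (h 0) x0 a"
definition t1 :: "(nat \<Rightarrow> nat) \<Rightarrow> nat \<Rightarrow> nat \<Rightarrow> nat \<Rightarrow> complex" where
  "t1 h b x4 x6 = ind (x6 = xr b (h 1 mod 2)) * pz (h 1 div 2) x4 b"
definition t2 :: "fam \<Rightarrow> (nat \<Rightarrow> nat) \<Rightarrow> nat \<Rightarrow> nat \<Rightarrow> nat \<Rightarrow> complex" where
  "t2 R h x0 x2 x6 = (\<Sum>q<2. \<Sum>q0<2. pz (h 2 div 2) x2 q * R (xr x6 (h 1 mod 2)) q q0 * pz (h 0) x0 q0
      * sg (h 2 mod 2 * xr x6 (h 1 mod 2)))"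
definition t3 :: "(nat \<Rightarrow> nat) \<Rightarrow> nat \<Rightarrow> nat \<Rightarrow> nat \<Rightarrow> complex" where
  "t3 h x2 x3 x7 = (\<Sum>q<2. pz (h 3 div 2) x3 q * ind (x7 = xr q (h 3 mod 2)) * pz (h 2 div 2) x2 q)"
definition t4 :: "fam \<Rightarrow> (nat \<Rightarrow> nat) \<Rightarrow> nat \<Rightarrow> nat \<Rightarrow> nat \<Rightarrow> complex" where
  "t4 M h x4 x5 x7 = (\<Sum>q<2. \<Sum>q0<2. pz (h 4 div 2) x5 q * M (xr x7 (h 3 mod 2)) q q0 * sg (h 2 mod 2 * q0)
      * pz (h 1 div 2) x4 q0 * sg (h 4 mod 2 * xr x7 (h 3 mod 2)))"
definition t5 :: "(nat \<Rightarrow> nat) \<Rightarrow> nat \<Rightarrow> nat \<Rightarrow> nat \<Rightarrow> complex" where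
  "t5 h x1 x5 x8 = (\<Sum>q<2. pz (h 5 div 2) x1 q * ind (x8 = xr q (h 5 mod 2)) * pz (h 4 div 2) x5 q)"
definition t6 :: "fam \<Rightarrow> (nat \<Rightarrow> nat) \<Rightarrow> nat \<Rightarrow> nat \<Rightarrow> nat \<Rightarrow> complex" where
  "t6 L h y1 x3 x8 = (\<Sum>q0<2. L (xr x8 (h 5 mod 2)) y1 q0 * sg (h 4 mod 2 * q0) * pz (h 3 div 2) x3 q0
      * sg (h 6 * xr x8 (h 5 mod 2)))"
definition t7 :: "(nat \<Rightarrow> nat) \<Rightarrow> nat \<Rightarrow> nat \<Rightarrow> complex" where
  "t7 h y2 x1 = sg (h 6 * y2) * pz (h 5 div 2) x1 y2"

definition P1 where "P1 ps h x0 b = (\<Sum>a<2. t0 h a x0 * ps a b)"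
definition P2 where "P2 ps h x0 x6 x4 = (\<Sum>b<2. t1 h b x4 x6 * P1 ps h x0 b)"
definition P3 where "P3 R ps h x2 x4 = (\<Sum>x0<2. \<Sum>x6<2. t2 R h x0 x2 x6 * P2 ps h x0 x6 x4)"

definition C3 where "C3 R ps h x2 x4 = (\<Sum>b<2. \<Sum>q<2. \<Sum>q0<2.
   pz (h 1 div 2) x4 b * sg (h 2 mod 2 * b) * pz (h 2 div 2) x2 q * R b q q0 * ps q0 b)"

lemma pz0: "k mod 2 = 0 \<Longrightarrow> pz k x q = (if x = q mod 2 then sg (k div 2 * q) else 0)"
  by (simp add: pz_def xr_def)
lemma pz1: "k mod 2 = 1 \<Longrightarrow> pz k x q = (if x = (q + 1) mod 2 then sg (k div 2 * q) else 0)"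
  by (simp add: pz_def xr_def)
lemma sgE: "even n \<Longrightarrow> sg n = 1" "odd n \<Longrightarrow> sg n = -1" by (simp_all add: sg_def)
lemma sg01: "sg 0 = 1" "sg (n * 0) = 1" "sg (n * 1) = sg n" "sg (0 * n) = 1" "sg (1 * n) = sg n"
  by (simp_all add: sg_def)
lemma mod2c: "(n::nat) mod 2 = 0 \<or> n mod 2 = 1" by arith
lemma ev2c: "even (n::nat) \<or> odd n" by simp

lemma step3: "P3 R ps h x2 x4 = C3 R ps h x2 x4"
  unfolding P3_def P2_def P1_def C3_def t2_def t1_def t0_def
  using mod2c[of "h 0"] ev2c[of "h 0 div 2"] mod2c[of "h 1"]
  apply (simp only: sum2)
  apply (elim disjE)
  apply (simp_all add: pz0 pz1 sgE sg01 xr_def ind_def algebra_simps)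
  done

definition P4 where "P4 R ps h x3 x7 x4 = (\<Sum>x2<2. t3 h x2 x3 x7 * P3 R ps h x2 x4)"
definition P5 where "P5 R M ps h x3 x5 = (\<Sum>x4<2. \<Sum>x7<2. t4 M h x4 x5 x7 * P4 R ps h x3 x7 x4)"
definition P6 where "P6 R M ps h x3 x8 x1 = (\<Sum>x5<2. t5 h x1 x5 x8 * P5 R M ps h x3 x5)"
definition P7 where "P7 R M L ps h y1 x1 = (\<Sum>x3<2. \<Sum>x8<2. t6 L h y1 x3 x8 * P6 R M ps h x3 x8 x1)"
definition P8 where "P8 R M L ps h y1 y2 = (\<Sum>x1<2. t7 h y2 x1 * P7 R M L ps h y1 x1)"

definition C4 where "C4 R ps h x3 x7 x4 = (\<Sum>b<2. \<Sum>q<2. \<Sum>q0<2.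
   pz (h 1 div 2) x4 b * sg (h 2 mod 2 * b) * pz (h 3 div 2) x3 q * ind (x7 = xr q (h 3 mod 2)) * R b q q0 * ps q0 b)"
definition C5 where "C5 R M ps h x3 x5 = (\<Sum>q<2. \<Sum>q'<2. \<Sum>b<2. \<Sum>q0<2.
   pz (h 3 div 2) x3 q * sg (h 4 mod 2 * q) * pz (h 4 div 2) x5 q' * M q q' b * R b q q0 * ps q0 b)"
definition C6 where "C6 R M ps h x3 x8 x1 = (\<Sum>q<2. \<Sum>q'<2. \<Sum>b<2. \<Sum>q0<2.
   pz (h 3 div 2) x3 q * sg (h 4 mod 2 * q) * pz (h 5 div 2) x1 q' * ind (x8 = xr q' (h 5 mod 2))
     * M q q' b * R b q q0 * ps q0 b)"
definition C7 where "C7 R M L ps h y1 x1 = (\<Sum>q'<2. \<Sum>q<2. \<Sum>b<2. \<Sum>q0<2.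
   pz (h 5 div 2) x1 q' * sg (h 6 * q') * L q' y1 q * M q q' b * R b q q0 * ps q0 b)"
definition C8 where "C8 R M L ps y1 y2 = (\<Sum>q<2. \<Sum>b<2. \<Sum>q0<2.
   L y2 y1 q * M q y2 b * R b q q0 * ps q0 b)"

lemma step4: "P4 R ps h x3 x7 x4 = C4 R ps h x3 x7 x4"
  unfolding P4_def step3 C3_def C4_def t3_def
  using mod2c[of "h 2 div 2"] ev2c[of "h 2 div 2 div 2"]
  apply (simp only: sum2)
  apply (elim disjE)
  apply (simp_all add: pz0 pz1 sgE sg01 xr_def ind_def algebra_simps)
  done

lemma step5: "P5 R M ps h x3 x5 = C5 R M ps h x3 x5"
  unfolding P5_def step4 C4_def C5_def t4_def
  using mod2c[of "h 1 div 2"] ev2c[of "h 1 div 2 div 2"] mod2c[of "h 3"] ev2c[of "h 2 mod 2"]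
  apply (simp only: sum2)
  apply (elim disjE)
  apply (simp_all add: pz0 pz1 sgE sg01 xr_def ind_def algebra_simps)
  done

lemma step6: "P6 R M ps h x3 x8 x1 = C6 R M ps h x3 x8 x1"
  unfolding P6_def step5 C5_def C6_def t5_def
  using mod2c[of "h 4 div 2"] ev2c[of "h 4 div 2 div 2"]
  apply (simp only: sum2)
  apply (elim disjE)
  apply (simp_all add: pz0 pz1 sgE sg01 xr_def ind_def algebra_simps)
  done

lemma step7: "P7 R M L ps h y1 x1 = C7 R M L ps h y1 x1"
  unfolding P7_def step6 C6_def C7_def t6_def
  using mod2c[of "h 3 div 2"] ev2c[of "h 3 div 2 div 2"] mod2c[of "h 5"] ev2c[of "h 4 mod 2"]
  apply (simp only: sum2)
  apply (elim disjE)
  apply (simp_all add: pz0 pz1 sgE sg01 xr_def ind_def algebra_simps)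
  done

lemma step8: assumes "y2 < 2" shows "P8 R M L ps h y1 y2 = C8 R M L ps y1 y2"
proof -
  have y: "y2 = 0 \<or> y2 = 1" using assms by arith
  show ?thesis
  unfolding P8_def step7 C7_def C8_def t7_def
  using mod2c[of "h 5 div 2"] ev2c[of "h 5 div 2 div 2"] ev2c[of "h 6"] y
  apply (simp only: sum2)
  apply (elim disjE)
  apply (simp_all add: pz0 pz1 sgE sg01 xr_def ind_def algebra_simps)
  done
qed

lemma cnj_pz[simp]: "cnj (pz k x q) = pz k x q" by (simp add: pz_def sg_def)
lemma cnj_sg[simp]: "cnj (sg n) = sg n" by (simp add: sg_def)
lemma cnj_ind[simp]: "cnj (ind P) = ind P" by (simp add: ind_def)
lemma cnj_r[simp]: "cnj r = r" by (simp add: r_def)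
lemma r2: "r * r = 1 / 2"
proof -
  have e: "(1 / sqrt 2) * (1 / sqrt 2) = (1/2::real)" by (simp add: divide_simps)
  have "r * r = complex_of_real ((1 / sqrt 2) * (1 / sqrt 2))" by (simp only: r_def of_real_mult)
  then show ?thesis by (simp only: e) simp
qed
lemma sg_sq: "sg n * sg n = 1" by (simp add: sg_def)

lemma pz_rows: assumes "x < 2" "x' < 2" shows "(\<Sum>q<2. pz k x q * pz k x' q) = ind (x = x')"
proof -
  have "x = 0 \<or> x = 1" "x' = 0 \<or> x' = 1" using assms by arith+
  then show ?thesis using mod2c[of k] ev2c[of "k div 2"]
    by (elim disjE) (simp_all add: sum2 pz0 pz1 sgE sg01 ind_def)
qed

lemma GC:
  fixes m :: "nat \<Rightarrow> nat \<Rightarrow> nat \<Rightarrow> nat \<Rightarrow> complex" and g :: "nat \<Rightarrow> nat \<Rightarrow> nat \<Rightarrow> complex"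
  assumes mc: "\<And>q v w q' v' w'. q < 2 \<Longrightarrow> v < 2 \<Longrightarrow> w < 2 \<Longrightarrow> q' < 2 \<Longrightarrow> v' < 2 \<Longrightarrow> w' < 2 \<Longrightarrow>
     (\<Sum>j<N. cnj (m j q v w) * m j q' v' w') = ind (q = q' \<and> v = v' \<and> w = w')"
   and gu: "\<And>w u u'. w < 2 \<Longrightarrow> u < 2 \<Longrightarrow> u' < 2 \<Longrightarrow> (\<Sum>q<2. cnj (g w q u) * g w q u') = ind (u = u')"
   and bits: "u < 2" "v < 2" "w < 2" "u' < 2" "v' < 2" "w' < 2"
  shows "(\<Sum>j<N. cnj (\<Sum>q<2. m j q v w * g w q u) * (\<Sum>q<2. m j q v' w' * g w' q u'))
       = ind (u = u' \<and> v = v' \<and> w = w')"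
proof -
  have "(\<Sum>j<N. cnj (\<Sum>q<2. m j q v w * g w q u) * (\<Sum>q<2. m j q v' w' * g w' q u'))
     = (\<Sum>j<N. \<Sum>q<2. \<Sum>q'<2. (cnj (g w q u) * g w' q' u') * (cnj (m j q v w) * m j q' v' w'))"
    by (simp add: sum_distrib_left sum_distrib_right mult_ac)
  also have "\<dots> = (\<Sum>q<2. \<Sum>q'<2. \<Sum>j<N. (cnj (g w q u) * g w' q' u') * (cnj (m j q v w) * m j q' v' w'))"
    by (simp add: sum.swap[of _ "{..<N}"])
  also have "\<dots> = (\<Sum>q<2. \<Sum>q'<2. (cnj (g w q u) * g w' q' u') * ind (q = q' \<and> v = v' \<and> w = w'))"
    by (simp add: sum_distrib_left[symmetric] mc bits)
  also have "\<dots> = ind (v = v' \<and> w = w') * (\<Sum>q<2. cnj (g w q u) * g w q u')"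
    by (simp add: sum2 ind_def)
  also have "\<dots> = ind (u = u' \<and> v = v' \<and> w = w')"
    using gu bits by (auto simp: ind_def)
  finally show ?thesis .
qed

lemma GU:
  fixes A P :: "nat \<Rightarrow> nat \<Rightarrow> complex" and x x' :: nat
  assumes A: "\<And>q0 q0'. q0 < 2 \<Longrightarrow> q0' < 2 \<Longrightarrow> (\<Sum>q<2. cnj (A q q0) * A q q0') = ind (q0 = q0')"
    and P: "\<And>x x'. x < 2 \<Longrightarrow> x' < 2 \<Longrightarrow> (\<Sum>q0<2. cnj (P x q0) * P x' q0) = ind (x = x')"
    and x: "x < 2" "x' < 2"
  shows "(\<Sum>q<2. cnj (\<Sum>q0<2. A q q0 * P x q0) * (\<Sum>q0<2. A q q0 * P x' q0)) = ind (x = x')"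
proof -
  have "(\<Sum>q<2. cnj (\<Sum>q0<2. A q q0 * P x q0) * (\<Sum>q0<2. A q q0 * P x' q0))
     = (\<Sum>q<2. \<Sum>q0<2. \<Sum>q0'<2. (cnj (P x q0) * P x' q0') * (cnj (A q q0) * A q q0'))"
    by (simp add: sum_distrib_left sum_distrib_right mult_ac)
  also have "\<dots> = (\<Sum>q0<2. \<Sum>q0'<2. \<Sum>q<2. (cnj (P x q0) * P x' q0') * (cnj (A q q0) * A q q0'))"
    by (simp add: sum2 algebra_simps)
  also have "\<dots> = (\<Sum>q0<2. \<Sum>q0'<2. (cnj (P x q0) * P x' q0') * ind (q0 = q0'))"
    by (simp add: sum_distrib_left[symmetric] A)
  also have "\<dots> = (\<Sum>q0<2. cnj (P x q0) * P x' q0)"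
    by (simp add: sum2 ind_def)
  finally show ?thesis using P x by simp
qed

lemma sg_sq2: "sg n * (sg n * z) = z" by (simp add: sg_def)

lemma GC6:
  fixes m :: "nat \<Rightarrow> nat \<Rightarrow> complex" and g :: "nat \<Rightarrow> nat \<Rightarrow> nat \<Rightarrow> complex"
  assumes mc: "\<And>w w'. w < 2 \<Longrightarrow> w' < 2 \<Longrightarrow> (\<Sum>j<N. cnj (m j w) * m j w') = ind (w = w')"
   and gu: "\<And>w u u'. w < 2 \<Longrightarrow> u < 2 \<Longrightarrow> u' < 2 \<Longrightarrow> (\<Sum>i<2. cnj (g w i u) * g w i u') = ind (u = u')"
   and bits: "u < 2" "w < 2" "u' < 2" "w' < 2"
  shows "(\<Sum>j<N. \<Sum>i<2. cnj (m j w * g w i u) * (m j w' * g w' i u')) = ind (u = u' \<and> w = w')"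
proof -
  have "(\<Sum>j<N. \<Sum>i<2. cnj (m j w * g w i u) * (m j w' * g w' i u'))
      = (\<Sum>i<2. \<Sum>j<N. (cnj (g w i u) * g w' i u') * (cnj (m j w) * m j w'))"
    by (subst sum.swap) (simp add: mult_ac)
  also have "\<dots> = (\<Sum>i<2. (cnj (g w i u) * g w' i u') * ind (w = w'))"
    by (simp add: sum_distrib_left[symmetric] mc bits)
  also have "\<dots> = ind (u = u' \<and> w = w')"
    using gu bits by (auto simp: ind_def sum_distrib_right[symmetric])
  finally show ?thesis .
qed

definition unit2 :: "(nat \<Rightarrow> nat \<Rightarrow> complex) \<Rightarrow> bool" where
  "unit2 A \<longleftrightarrow> (\<forall>q0<2. \<forall>q0'<2. (\<Sum>q<2. cnj (A q q0) * A q q0') = ind (q0 = q0'))"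

lemma bit_cases: "(x::nat) < 2 \<Longrightarrow> x = 0 \<or> x = 1" by arith

lemma sum8_split: "(\<Sum>j<(8::nat). f (j mod 2) (j div 2)) = (\<Sum>a<(2::nat). \<Sum>k<(4::nat). f a k :: complex)"
  by (simp add: sum8 sum2 sum4 algebra_simps)

lemma pz_compl: assumes "q < 2" "v < 2" "q' < 2" "v' < 2"
  shows "(\<Sum>k<4. pz k v q * pz k v' q') = 2 * ind (q = q' \<and> v = v')"
  using bit_cases[OF assms(1)] bit_cases[OF assms(2)] bit_cases[OF assms(3)] bit_cases[OF assms(4)]
  by (elim disjE) (simp_all add: sum4 pz_def sg_def xr_def ind_def)

lemma sg_compl: assumes "c < 2" "c' < 2"
  shows "(\<Sum>a<2. sg (a * c) * sg (a * c')) = 2 * ind (c = c')"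
  using bit_cases[OF assms(1)] bit_cases[OF assms(2)]
  by (elim disjE) (simp_all add: sum2 sg_def ind_def)

lemma ind_compl: assumes "w < 2" "w' < 2" "q < 2" "q' < 2"
  shows "(\<Sum>a<2. ind (w = xr q a) * ind (w' = xr q' a)) = ind (xr w q = xr w' q')"
  using bit_cases[OF assms(1)] bit_cases[OF assms(2)] bit_cases[OF assms(3)] bit_cases[OF assms(4)]
  by (elim disjE) (simp_all add: sum2 xr_def ind_def)

lemma xr_inj: "w < 2 \<Longrightarrow> w' < 2 \<Longrightarrow> xr w m = xr w' m \<longleftrightarrow> w = w'"
  by (simp add: xr_def) arith

lemma xr_lt: "xr w m < 2" by (simp add: xr_def)

lemma mcA: assumes "q < 2" "v < 2" "w < 2" "q' < 2" "v' < 2" "w' < 2"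
  shows "(\<Sum>j<8. cnj (r * r * pz (j div 2) v q * sg (j mod 2 * xr w mm)) * (r * r * pz (j div 2) v' q' * sg (j mod 2 * xr w' mm)))
     = ind (q = q' \<and> v = v' \<and> w = w')"
proof -
  have "(\<Sum>j<8. cnj (r * r * pz (j div 2) v q * sg (j mod 2 * xr w mm)) * (r * r * pz (j div 2) v' q' * sg (j mod 2 * xr w' mm)))
     = (\<Sum>a<2. \<Sum>k<4. (r * r * (r * r)) * ((pz k v q * pz k v' q') * (sg (a * xr w mm) * sg (a * xr w' mm))))"
  proof -
    have "(\<Sum>j<8. cnj (r * r * pz (j div 2) v q * sg (j mod 2 * xr w mm)) * (r * r * pz (j div 2) v' q' * sg (j mod 2 * xr w' mm)))
      = (\<Sum>a<2. \<Sum>k<4. cnj (r * r * pz k v q * sg (a * xr w mm)) * (r * r * pz k v' q' * sg (a * xr w' mm)))"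
      by (simp add: sum8 sum4 sum2)
    then show ?thesis by (simp add: mult_ac)
  qed
  also have "\<dots> = (r * r * (r * r)) * ((\<Sum>k<4. pz k v q * pz k v' q') * (\<Sum>a<2. sg (a * xr w mm) * sg (a * xr w' mm)))"
    by (simp add: sum_distrib_left sum_distrib_right mult_ac)
  also have "\<dots> = ind (q = q' \<and> v = v' \<and> w = w')"
    using assms by (simp add: pz_compl sg_compl xr_lt xr_inj r2 ind_def)
  finally show ?thesis .
qed

lemma mcB: assumes "q < 2" "v < 2" "w < 2" "q' < 2" "v' < 2" "w' < 2"
  shows "(\<Sum>j<8. cnj (r * pz (j div 2) v q * ind (w = xr q (j mod 2))) * (r * pz (j div 2) v' q' * ind (w' = xr q' (j mod 2))))
     = ind (q = q' \<and> v = v' \<and> w = w')"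
proof -
  have "(\<Sum>j<8. cnj (r * pz (j div 2) v q * ind (w = xr q (j mod 2))) * (r * pz (j div 2) v' q' * ind (w' = xr q' (j mod 2))))
     = (\<Sum>a<2. \<Sum>k<4. (r * r) * ((pz k v q * pz k v' q') * (ind (w = xr q a) * ind (w' = xr q' a))))"
  proof -
    have "(\<Sum>j<8. cnj (r * pz (j div 2) v q * ind (w = xr q (j mod 2))) * (r * pz (j div 2) v' q' * ind (w' = xr q' (j mod 2))))
      = (\<Sum>a<2. \<Sum>k<4. cnj (r * pz k v q * ind (w = xr q a)) * (r * pz k v' q' * ind (w' = xr q' a)))"
      by (simp add: sum8 sum4 sum2)
    then show ?thesis by (simp add: mult_ac)
  qed
  also have "\<dots> = (r * r) * ((\<Sum>k<4. pz k v q * pz k v' q') * (\<Sum>a<2. ind (w = xr q a) * ind (w' = xr q' a)))"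
    by (simp add: sum_distrib_left sum_distrib_right mult_ac)
  also have "\<dots> = ind (q = q' \<and> v = v' \<and> w = w')"
    using assms by (simp add: pz_compl ind_compl r2) (auto simp: ind_def xr_inj)
  finally show ?thesis .
qed

lemma pzP: "x < 2 \<Longrightarrow> x' < 2 \<Longrightarrow> (\<Sum>q0<2. cnj (pz k x q0) * pz k x' q0) = ind (x = x')"
  by (simp add: pz_rows)

lemma pzP2: "x < 2 \<Longrightarrow> x' < 2 \<Longrightarrow> (\<Sum>q0<2. cnj (sg (n * q0) * pz k x q0) * (sg (n * q0) * pz k x' q0)) = ind (x = x')"
proof -
  assume a: "x < 2" "x' < 2"
  have "(\<Sum>q0<2. cnj (sg (n * q0) * pz k x q0) * (sg (n * q0) * pz k x' q0)) = (\<Sum>q0<2. pz k x q0 * pz k x' q0)"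
    by (intro sum.cong refl) (simp add: mult_ac sg_sq sg_sq2)
  then show ?thesis using a by (simp add: pz_rows)
qed

lemma BL2: assumes U: "\<forall>c<2. unit2 (R c)" and b: "p0 < 2" "p1 < 2" "p2 < 2" "p0' < 2" "p1' < 2" "p2' < 2"
  shows "(\<Sum>j<8. cnj (r * r * t2 R (h(2 := j)) p0 p1 p2) * (r * r * t2 R (h(2 := j)) p0' p1' p2'))
     = ind (p0 = p0' \<and> p1 = p1' \<and> p2 = p2')"
proof -
  let ?m = "\<lambda>j q v w. r * r * pz (j div 2) v q * sg (j mod 2 * xr w (h 1 mod 2))"
  let ?g = "\<lambda>w q u. \<Sum>q0<2. R (xr w (h 1 mod 2)) q q0 * pz (h 0) u q0"
  have eq: "r * r * t2 R (h(2 := j)) x0 x2 x6 = (\<Sum>q<2. ?m j q x2 x6 * ?g x6 q x0)" for j x0 x2 x6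
    by (simp add: t2_def sum2 algebra_simps)
  show ?thesis unfolding eq
  proof (rule GC[where m = ?m and g = ?g])
    show "(\<Sum>j<8. cnj (?m j q v w) * ?m j q' v' w') = ind (q = q' \<and> v = v' \<and> w = w')"
      if "q < 2" "v < 2" "w < 2" "q' < 2" "v' < 2" "w' < 2" for q v w q' v' w'
      using mcA[OF that] by simp
    show "(\<Sum>q<2. cnj (?g w q u) * ?g w q u') = ind (u = u')" if "w < 2" "u < 2" "u' < 2" for w u u'
    proof (rule GU)
      show "(\<Sum>q<2. cnj (R (xr w (h 1 mod 2)) q q0) * R (xr w (h 1 mod 2)) q q0') = ind (q0 = q0')"
        if "q0 < 2" "q0' < 2" for q0 q0'
        using U xr_lt[of w "h 1 mod 2"] that unfolding unit2_def by blast
      show "(\<Sum>q0<2. cnj (pz (h 0) x q0) * pz (h 0) x' q0) = ind (x = x')" if "x < 2" "x' < 2" for x x'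
        using pzP[OF that] .
    qed (use that in auto)
  qed (use b in auto)
qed

lemma BL4: assumes U: "\<forall>c<2. unit2 (M c)" and b: "p0 < 2" "p1 < 2" "p2 < 2" "p0' < 2" "p1' < 2" "p2' < 2"
  shows "(\<Sum>j<8. cnj (r * r * t4 M (h(4 := j)) p0 p1 p2) * (r * r * t4 M (h(4 := j)) p0' p1' p2'))
     = ind (p0 = p0' \<and> p1 = p1' \<and> p2 = p2')"
proof -
  let ?m = "\<lambda>j q v w. r * r * pz (j div 2) v q * sg (j mod 2 * xr w (h 3 mod 2))"
  let ?g = "\<lambda>w q u. \<Sum>q0<2. M (xr w (h 3 mod 2)) q q0 * (sg (h 2 mod 2 * q0) * pz (h 1 div 2) u q0)"
  have eq: "r * r * t4 M (h(4 := j)) x4 x5 x7 = (\<Sum>q<2. ?m j q x5 x7 * ?g x7 q x4)" for j x4 x5 x7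
    by (simp add: t4_def sum2 algebra_simps)
  show ?thesis unfolding eq
  proof (rule GC[where m = ?m and g = ?g])
    show "(\<Sum>j<8. cnj (?m j q v w) * ?m j q' v' w') = ind (q = q' \<and> v = v' \<and> w = w')"
      if "q < 2" "v < 2" "w < 2" "q' < 2" "v' < 2" "w' < 2" for q v w q' v' w'
      using mcA[OF that] by simp
    show "(\<Sum>q<2. cnj (?g w q u) * ?g w q u') = ind (u = u')" if "w < 2" "u < 2" "u' < 2" for w u u'
    proof (rule GU)
      show "(\<Sum>q<2. cnj (M (xr w (h 3 mod 2)) q q0) * M (xr w (h 3 mod 2)) q q0') = ind (q0 = q0')"
        if "q0 < 2" "q0' < 2" for q0 q0'
        using U xr_lt[of w "h 3 mod 2"] that unfolding unit2_def by blast
      show "(\<Sum>q0<2. cnj (sg (h 2 mod 2 * q0) * pz (h 1 div 2) x q0) * (sg (h 2 mod 2 * q0) * pz (h 1 div 2) x' q0)) = ind (x = x')"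
        if "x < 2" "x' < 2" for x x'
        using pzP2[OF that] .
    qed (use that in auto)
  qed (use b in auto)
qed

lemma BL3: assumes b: "p0 < 2" "p1 < 2" "p2 < 2" "p0' < 2" "p1' < 2" "p2' < 2"
  shows "(\<Sum>j<8. cnj (r * t3 (h(3 := j)) p0 p1 p2) * (r * t3 (h(3 := j)) p0' p1' p2'))
     = ind (p0 = p0' \<and> p1 = p1' \<and> p2 = p2')"
proof -
  let ?m = "\<lambda>j q v w. r * pz (j div 2) v q * ind (w = xr q (j mod 2))"
  let ?g = "\<lambda>w q u. pz (h 2 div 2) u q"
  have eq: "r * t3 (h(3 := j)) x2 x3 x7 = (\<Sum>q<2. ?m j q x3 x7 * ?g x7 q x2)" for j x2 x3 x7
    by (simp add: t3_def sum2 algebra_simps)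
  show ?thesis unfolding eq
  proof (rule GC[where m = ?m and g = ?g])
    show "(\<Sum>j<8. cnj (?m j q v w) * ?m j q' v' w') = ind (q = q' \<and> v = v' \<and> w = w')"
      if "q < 2" "v < 2" "w < 2" "q' < 2" "v' < 2" "w' < 2" for q v w q' v' w'
      using mcB[OF that] by simp
    show "(\<Sum>q<2. cnj (?g w q u) * ?g w q u') = ind (u = u')" if "w < 2" "u < 2" "u' < 2" for w u u'
      using that by (simp add: pz_rows)
  qed (use b in auto)
qed

lemma BL5: assumes b: "p0 < 2" "p1 < 2" "p2 < 2" "p0' < 2" "p1' < 2" "p2' < 2"
  shows "(\<Sum>j<8. cnj (r * t5 (h(5 := j)) p0 p1 p2) * (r * t5 (h(5 := j)) p0' p1' p2'))
     = ind (p0 = p0' \<and> p1 = p1' \<and> p2 = p2')"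
proof -
  let ?m = "\<lambda>j q v w. r * pz (j div 2) v q * ind (w = xr q (j mod 2))"
  let ?g = "\<lambda>w q u. pz (h 4 div 2) u q"
  have eq: "r * t5 (h(5 := j)) x1 x5 x8 = (\<Sum>q<2. ?m j q x1 x8 * ?g x8 q x5)" for j x1 x5 x8
    by (simp add: t5_def sum2 algebra_simps)
  have "(\<Sum>j<8. cnj (\<Sum>q<2. ?m j q p0 p2 * ?g p2 q p1) * (\<Sum>q<2. ?m j q p0' p2' * ?g p2' q p1'))
     = ind (p1 = p1' \<and> p0 = p0' \<and> p2 = p2')"
  proof (rule GC[where m = ?m and g = ?g])
    show "(\<Sum>j<8. cnj (?m j q v w) * ?m j q' v' w') = ind (q = q' \<and> v = v' \<and> w = w')"
      if "q < 2" "v < 2" "w < 2" "q' < 2" "v' < 2" "w' < 2" for q v w q' v' w'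
      using mcB[OF that] by simp
    show "(\<Sum>q<2. cnj (?g w q u) * ?g w q u') = ind (u = u')" if "w < 2" "u < 2" "u' < 2" for w u u'
      using that by (simp add: pz_rows)
  qed (use b in auto)
  then show ?thesis unfolding eq by (simp add: ind_def conj_ac)
qed

lemma BL6: assumes U: "\<forall>c<2. unit2 (L c)" and b: "p0 < 2" "p1 < 2" "p0' < 2" "p1' < 2"
  shows "(\<Sum>j<2. \<Sum>i<2. cnj (r * t6 L (h(6 := j)) i p0 p1) * (r * t6 L (h(6 := j)) i p0' p1'))
     = ind (p0 = p0' \<and> p1 = p1')"
proof -
  let ?m = "\<lambda>j w. r * sg (j * xr w (h 5 mod 2))"
  let ?g = "\<lambda>w i u. \<Sum>q0<2. L (xr w (h 5 mod 2)) i q0 * (sg (h 4 mod 2 * q0) * pz (h 3 div 2) u q0)"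
  have eq: "r * t6 L (h(6 := j)) i x3 x8 = ?m j x8 * ?g x8 i x3" for j i x3 x8
    by (simp add: t6_def sum2 algebra_simps)
  have "(\<Sum>j<2. \<Sum>i<2. cnj (?m j p1 * ?g p1 i p0) * (?m j p1' * ?g p1' i p0')) = ind (p0 = p0' \<and> p1 = p1')"
  proof (rule GC6[where m = ?m and g = ?g])
    show "(\<Sum>j<2. cnj (?m j w) * ?m j w') = ind (w = w')" if "w < 2" "w' < 2" for w w'
      using bit_cases[OF that(1)] bit_cases[OF that(2)] mod2c[of "h 5"]
      by (elim disjE) (simp_all add: sum2 sg_def xr_def ind_def r2)
    show "(\<Sum>i<2. cnj (?g w i u) * ?g w i u') = ind (u = u')" if "w < 2" "u < 2" "u' < 2" for w u u'
    proof (rule GU)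
      show "(\<Sum>q<2. cnj (L (xr w (h 5 mod 2)) q q0) * L (xr w (h 5 mod 2)) q q0') = ind (q0 = q0')"
        if "q0 < 2" "q0' < 2" for q0 q0'
        using U xr_lt[of w "h 5 mod 2"] that unfolding unit2_def by blast
      show "(\<Sum>q0<2. cnj (sg (h 4 mod 2 * q0) * pz (h 3 div 2) x q0) * (sg (h 4 mod 2 * q0) * pz (h 3 div 2) x' q0)) = ind (x = x')"
        if "x < 2" "x' < 2" for x x'
        using pzP2[OF that] .
    qed (use that in auto)
  qed (use b in auto)
  then show ?thesis unfolding eq .
qed

lemma BL7: assumes b: "p0 < 2" "p0' < 2"
  shows "(\<Sum>j<1. \<Sum>i<2. cnj (1 * t7 (h(7 := j)) i p0) * (1 * t7 (h(7 := j)) i p0')) = ind (p0 = p0')"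
proof -
  have "(\<Sum>i<2. cnj (t7 (h(7 := 0)) i p0) * t7 (h(7 := 0)) i p0') = (\<Sum>i<2. pz (h 5 div 2) p0 i * pz (h 5 div 2) p0' i)"
    by (intro sum.cong refl) (simp add: t7_def mult_ac sg_sq sg_sq2)
  then show ?thesis using b by (simp add: pz_rows)
qed

lemma BL0: assumes b: "p0 < 2" "p1 < 2" "p0' < 2" "p1' < 2"
  shows "(\<Sum>j<4. cnj (r * t0 (h(0 := j)) p0 p1) * (r * t0 (h(0 := j)) p0' p1')) = ind (p0 = p0' \<and> p1 = p1')"
proof -
  have "(\<Sum>j<4. cnj (r * t0 (h(0 := j)) p0 p1) * (r * t0 (h(0 := j)) p0' p1'))
     = r * r * (\<Sum>k<4. pz k p1 p0 * pz k p1' p0')"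
    by (simp add: t0_def sum_distrib_left mult_ac)
  also have "\<dots> = ind (p0 = p0' \<and> p1 = p1')" using b by (simp add: pz_compl r2 ind_def)
  finally show ?thesis .
qed

lemma BL1: assumes b: "p0 < 2" "p1 < 2" "p2 < 2" "p0' < 2" "p1' < 2" "p2' < 2"
  shows "(\<Sum>j<8. cnj (r * t1 (h(1 := j)) p0 p1 p2) * (r * t1 (h(1 := j)) p0' p1' p2'))
     = ind (p0 = p0' \<and> p1 = p1' \<and> p2 = p2')"
proof -
  have "(\<Sum>j<8. cnj (r * t1 (h(1 := j)) p0 p1 p2) * (r * t1 (h(1 := j)) p0' p1' p2'))
     = (\<Sum>j<8. cnj (r * pz (j div 2) p1 p0 * ind (p2 = xr p0 (j mod 2))) * (r * pz (j div 2) p1' p0' * ind (p2' = xr p0' (j mod 2))))"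
    by (intro sum.cong refl) (simp add: t1_def mult_ac)
  also have "\<dots> = ind (p0 = p0' \<and> p1 = p1' \<and> p2 = p2')" using mcB[OF b(1,2,3,4,5,6)] .
  finally show ?thesis .
qed

definition nu :: "nat \<Rightarrow> complex" where "nu v = [r, r, r*r, r, r*r, r, r, 1] ! v"
definition Mo :: "nat \<Rightarrow> nat" where "Mo v = [4, 8, 8, 8, 8, 8, 2, 1] ! v"
definition tn :: "fam \<Rightarrow> fam \<Rightarrow> fam \<Rightarrow> nat \<Rightarrow> (nat \<Rightarrow> nat) \<Rightarrow> nat \<Rightarrow> nat \<Rightarrow> nat \<Rightarrow> nat \<Rightarrow> complex" where
  "tn R M L v h i p0 p1 p2 = (if v = 0 then t0 h p0 p1 else if v = 1 then t1 h p0 p1 p2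
     else if v = 2 then t2 R h p0 p1 p2 else if v = 3 then t3 h p0 p1 p2
     else if v = 4 then t4 M h p0 p1 p2 else if v = 5 then t5 h p0 p1 p2
     else if v = 6 then t6 L h i p0 p1 else t7 h i p0)"
definition Kr :: "fam \<Rightarrow> fam \<Rightarrow> fam \<Rightarrow> nat \<Rightarrow> (nat \<Rightarrow> nat) \<Rightarrow> nat \<Rightarrow> complex mat" where
  "Kr R M L v h j = mat (Dout v) (D0 v) (\<lambda>(i, a). nu v * tn R M L v (h(v := j)) i (a mod 2) (a div 2 mod 2) (a div 4 mod 2))"

lemma D0_vals: "D0 0 = 4" "D0 1 = 8" "D0 2 = 8" "D0 3 = 8" "D0 4 = 8" "D0 5 = 8" "D0 6 = 4" "D0 7 = 2"
  by (simp_all add: D0_def num_nodes_def nq)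
lemma Dout_vals: "Dout 0 = 1" "Dout 1 = 1" "Dout 2 = 1" "Dout 3 = 1" "Dout 4 = 1" "Dout 5 = 1" "Dout 6 = 2" "Dout 7 = 2"
  by (simp_all add: Dout_def)

lemma lt8: "(a::nat) < 8 \<Longrightarrow> a = 0 \<or> a = 1 \<or> a = 2 \<or> a = 3 \<or> a = 4 \<or> a = 5 \<or> a = 6 \<or> a = 7" by arith
lemma lt4: "(a::nat) < 4 \<Longrightarrow> a = 0 \<or> a = 1 \<or> a = 2 \<or> a = 3" by arith

lemma conv8: fixes a b :: nat and F :: "nat \<Rightarrow> nat \<Rightarrow> nat \<Rightarrow> nat \<Rightarrow> nat \<Rightarrow> nat \<Rightarrow> complex"
  assumes "\<And>x y z x' y' z'. x < 2 \<Longrightarrow> y < 2 \<Longrightarrow> z < 2 \<Longrightarrow> x' < 2 \<Longrightarrow> y' < 2 \<Longrightarrow> z' < 2 \<Longrightarrow>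
     F x y z x' y' z' = ind (x = x' \<and> y = y' \<and> z = z')"
  and "a < 8" "b < 8"
  shows "F (a mod 2) (a div 2 mod 2) (a div 4 mod 2) (b mod 2) (b div 2 mod 2) (b div 4 mod 2) = (if a = b then 1 else 0)"
  using lt8[OF assms(2)] lt8[OF assms(3)] by (elim disjE) (simp_all add: assms(1) ind_def)

lemma conv4: fixes a b :: nat and F :: "nat \<Rightarrow> nat \<Rightarrow> nat \<Rightarrow> nat \<Rightarrow> nat \<Rightarrow> nat \<Rightarrow> complex"
  assumes "\<And>x y x' y'. x < 2 \<Longrightarrow> y < 2 \<Longrightarrow> x' < 2 \<Longrightarrow> y' < 2 \<Longrightarrow>
     F x y 0 x' y' 0 = ind (x = x' \<and> y = y')"
  and "a < 4" "b < 4"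
  shows "F (a mod 2) (a div 2 mod 2) (a div 4 mod 2) (b mod 2) (b div 2 mod 2) (b div 4 mod 2) = (if a = b then 1 else 0)"
  using lt4[OF assms(2)] lt4[OF assms(3)] by (elim disjE) (simp_all add: assms(1) ind_def)

lemma conv2: fixes a b :: nat and F :: "nat \<Rightarrow> nat \<Rightarrow> nat \<Rightarrow> nat \<Rightarrow> nat \<Rightarrow> nat \<Rightarrow> complex"
  assumes "\<And>x x'. x < 2 \<Longrightarrow> x' < 2 \<Longrightarrow> F x 0 0 x' 0 0 = ind (x = x')"
  and "a < 2" "b < 2"
  shows "F (a mod 2) (a div 2 mod 2) (a div 4 mod 2) (b mod 2) (b div 2 mod 2) (b div 4 mod 2) = (if a = b then 1 else 0)"
  using bit_cases[OF assms(2)] bit_cases[OF assms(3)] by (elim disjE) (simp_all add: assms(1) ind_def)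

lemma BL7': "p0 < 2 \<Longrightarrow> p0' < 2 \<Longrightarrow> (\<Sum>i<2. cnj (t7 (h(7 := 0)) i p0) * t7 (h(7 := 0)) i p0') = ind (p0 = p0')"
  using BL7[of p0 p0' h] by (simp add: One_nat_def)

lemma sum1: "(\<Sum>i<(1::nat). f i) = (f 0 :: complex)" by (simp add: One_nat_def)

lemma Kr_complete:
  assumes UR: "\<forall>c<2. unit2 (R c)" and UM: "\<forall>c<2. unit2 (M c)" and UL: "\<forall>c<2. unit2 (L c)" and v: "v < 8"
  shows "complete (Mo v) (D0 v) (Dout v) (Kr R M L v h)"
  unfolding complete_def
proof (intro conjI allI impI)
  show "Kr R M L v h j \<in> carrier_mat (Dout v) (D0 v)" for j by (simp add: Kr_def)
  fix a b assume a: "a < D0 v" and b: "b < D0 v"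
  have e: "(\<Sum>j<Mo v. \<Sum>i<Dout v. cnj (Kr R M L v h j $$ (i, a)) * Kr R M L v h j $$ (i, b))
     = (\<Sum>j<Mo v. \<Sum>i<Dout v. cnj (nu v * tn R M L v (h(v := j)) i (a mod 2) (a div 2 mod 2) (a div 4 mod 2))
          * (nu v * tn R M L v (h(v := j)) i (b mod 2) (b div 2 mod 2) (b div 4 mod 2)))"
    using a b by (intro sum.cong refl) (simp add: Kr_def)
  let ?L = "(\<Sum>j<Mo v. \<Sum>i<Dout v. cnj (nu v * tn R M L v (h(v := j)) i (a mod 2) (a div 2 mod 2) (a div 4 mod 2))
          * (nu v * tn R M L v (h(v := j)) i (b mod 2) (b div 2 mod 2) (b div 4 mod 2)))"
  have "?L = (if a = b then 1 else 0)"
    using lt8[OF v]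
  proof (elim disjE)
    assume vv: "v = 0"
    have "?L = (\<Sum>j<4. cnj (r * t0 (h(0 := j)) (a mod 2) (a div 2 mod 2)) * (r * t0 (h(0 := j)) (b mod 2) (b div 2 mod 2)))"
      using vv by (simp add: Mo_def nu_def tn_def Dout_vals sum1)
    also have "\<dots> = (if a = b then 1 else 0)"
      using a b vv by (intro conv4[where F = "\<lambda>x y z x' y' z'. \<Sum>j<4. cnj (r * t0 (h(0 := j)) x y) * (r * t0 (h(0 := j)) x' y')"]) (simp_all add: BL0[simplified] D0_vals)
    finally show ?thesis .
  next
    assume vv: "v = 1"
    have "?L = (\<Sum>j<8. cnj (r * t1 (h(1 := j)) (a mod 2) (a div 2 mod 2) (a div 4 mod 2)) * (r * t1 (h(1 := j)) (b mod 2) (b div 2 mod 2) (b div 4 mod 2)))"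
      using vv by (simp add: Mo_def nu_def tn_def Dout_vals sum1)
    also have "\<dots> = (if a = b then 1 else 0)"
      using a b vv by (intro conv8[where F = "\<lambda>x y z x' y' z'. \<Sum>j<8. cnj (r * t1 (h(1 := j)) x y z) * (r * t1 (h(1 := j)) x' y' z')"]) (simp_all add: BL1[simplified] D0_vals)
    finally show ?thesis .
  next
    assume vv: "v = 2"
    have "?L = (\<Sum>j<8. cnj (r * r * t2 R (h(2 := j)) (a mod 2) (a div 2 mod 2) (a div 4 mod 2)) * (r * r * t2 R (h(2 := j)) (b mod 2) (b div 2 mod 2) (b div 4 mod 2)))"
      using vv by (simp add: Mo_def nu_def tn_def Dout_vals sum1)
    also have "\<dots> = (if a = b then 1 else 0)"
      using a b vv by (intro conv8[where F = "\<lambda>x y z x' y' z'. \<Sum>j<8. cnj (r * r * t2 R (h(2 := j)) x y z) * (r * r * t2 R (h(2 := j)) x' y' z')"]) (simp_all add: BL2[OF UR, simplified] D0_vals)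
    finally show ?thesis .
  next
    assume vv: "v = 3"
    have "?L = (\<Sum>j<8. cnj (r * t3 (h(3 := j)) (a mod 2) (a div 2 mod 2) (a div 4 mod 2)) * (r * t3 (h(3 := j)) (b mod 2) (b div 2 mod 2) (b div 4 mod 2)))"
      using vv by (simp add: Mo_def nu_def tn_def Dout_vals sum1)
    also have "\<dots> = (if a = b then 1 else 0)"
      using a b vv by (intro conv8[where F = "\<lambda>x y z x' y' z'. \<Sum>j<8. cnj (r * t3 (h(3 := j)) x y z) * (r * t3 (h(3 := j)) x' y' z')"]) (simp_all add: BL3[simplified] D0_vals)
    finally show ?thesis .
  next
    assume vv: "v = 4"
    have "?L = (\<Sum>j<8. cnj (r * r * t4 M (h(4 := j)) (a mod 2) (a div 2 mod 2) (a div 4 mod 2)) * (r * r * t4 M (h(4 := j)) (b mod 2) (b div 2 mod 2) (b div 4 mod 2)))"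
      using vv by (simp add: Mo_def nu_def tn_def Dout_vals sum1)
    also have "\<dots> = (if a = b then 1 else 0)"
      using a b vv by (intro conv8[where F = "\<lambda>x y z x' y' z'. \<Sum>j<8. cnj (r * r * t4 M (h(4 := j)) x y z) * (r * r * t4 M (h(4 := j)) x' y' z')"]) (simp_all add: BL4[OF UM, simplified] D0_vals)
    finally show ?thesis .
  next
    assume vv: "v = 5"
    have "?L = (\<Sum>j<8. cnj (r * t5 (h(5 := j)) (a mod 2) (a div 2 mod 2) (a div 4 mod 2)) * (r * t5 (h(5 := j)) (b mod 2) (b div 2 mod 2) (b div 4 mod 2)))"
      using vv by (simp add: Mo_def nu_def tn_def Dout_vals sum1)
    also have "\<dots> = (if a = b then 1 else 0)"
      using a b vv by (intro conv8[where F = "\<lambda>x y z x' y' z'. \<Sum>j<8. cnj (r * t5 (h(5 := j)) x y z) * (r * t5 (h(5 := j)) x' y' z')"]) (simp_all add: BL5[simplified] D0_vals)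
    finally show ?thesis .
  next
    assume vv: "v = 6"
    have "?L = (\<Sum>j<2. \<Sum>i<2. cnj (r * t6 L (h(6 := j)) i (a mod 2) (a div 2 mod 2)) * (r * t6 L (h(6 := j)) i (b mod 2) (b div 2 mod 2)))"
      using vv by (simp add: Mo_def nu_def tn_def Dout_vals sum1)
    also have "\<dots> = (if a = b then 1 else 0)"
      using a b vv by (intro conv4[where F = "\<lambda>x y z x' y' z'. \<Sum>j<2. \<Sum>i<2. cnj (r * t6 L (h(6 := j)) i x y) * (r * t6 L (h(6 := j)) i x' y')"]) (simp_all add: BL6[OF UL, simplified] D0_vals)
    finally show ?thesis .
  next
    assume vv: "v = 7"
    have "?L = (\<Sum>j<1. \<Sum>i<2. cnj (1 * t7 (h(7 := j)) i (a mod 2)) * (1 * t7 (h(7 := j)) i (b mod 2)))"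
      using vv by (simp add: Mo_def nu_def tn_def Dout_vals sum1)
    also have "\<dots> = (if a = b then 1 else 0)"
      using a b vv by (intro conv2[where F = "\<lambda>x y z x' y' z'. \<Sum>j<1. \<Sum>i<2. cnj (1 * t7 (h(7 := j)) i x) * (1 * t7 (h(7 := j)) i x')"]) (simp_all add: BL7' D0_vals sum1)
    finally show ?thesis .
  qed
  then show "(\<Sum>j<Mo v. \<Sum>i<Dout v. cnj (Kr R M L v h j $$ (i, a)) * Kr R M L v h j $$ (i, b)) = (if a = b then 1 else 0)"
    using e by simp
qed

definition ps_of :: "complex vec \<Rightarrow> nat \<Rightarrow> nat \<Rightarrow> complex" where "ps_of \<psi> a b = \<psi> $ (2 * a + b)"

definition Psi :: "complex vec \<Rightarrow> fam \<Rightarrow> fam \<Rightarrow> fam \<Rightarrow> nat \<Rightarrow> (nat \<Rightarrow> nat) \<Rightarrow> cfg \<Rightarrow> complex" where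
  "Psi \<psi> R M L v h = (if v = 0 then S0 (ps_of \<psi>)
     else if v = 1 then (\<lambda>c. r ^ 2 * S1 (P1 (ps_of \<psi>) h) c)
     else if v = 2 then (\<lambda>c. r ^ 5 * S2 (P2 (ps_of \<psi>) h) c)
     else if v = 3 then (\<lambda>c. r ^ 8 * S3 (P3 R (ps_of \<psi>) h) c)
     else if v = 4 then (\<lambda>c. r ^ 11 * S4 (P4 R (ps_of \<psi>) h) c)
     else if v = 5 then (\<lambda>c. r ^ 14 * S5 (P5 R M (ps_of \<psi>) h) c)
     else if v = 6 then (\<lambda>c. r ^ 17 * S6 (P6 R M (ps_of \<psi>) h) c)
     else if v = 7 then (\<lambda>c. r ^ 18 * S7 (P7 R M L (ps_of \<psi>) h) c)
     else (\<lambda>c. r ^ 18 * S8 (P8 R M L (ps_of \<psi>) h) c))"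

lemma lapply_Kr: "c v < Dout v \<Longrightarrow> lapply v (Kr R M L v h j) f c
   = (\<Sum>a<D0 v. (nu v * tn R M L v (h(v := j)) (c v) (a mod 2) (a div 2 mod 2) (a div 4 mod 2)) * f (c(v := a)))"
  unfolding lapply_def by (intro sum.cong) (simp_all add: Kr_def)

lemma cfg_lt: assumes "c \<in> configs (Dv (Suc v))" "v < 8" shows "c v < Dout v"
proof -
  have "\<forall>va<8. c va < Dv (Suc v) va" using assms(1) by (simp add: configs_def num_nodes_def)
  then have "c v < Dv (Suc v) v" using assms(2) by blast
  then show ?thesis by (simp add: Dv_def)
qed

lemma loc1: "P1 ps (h(1 := j)) = P1 ps h" by (simp add: fun_eq_iff P1_def t0_def)
lemma loc2: "P2 ps (h(2 := j)) = P2 ps h" by (simp add: fun_eq_iff P2_def P1_def t1_def t0_def)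
lemma loc3: "P3 R ps (h(3 := j)) = P3 R ps h" by (simp add: fun_eq_iff step3 C3_def)
lemma loc4: "P4 R ps (h(4 := j)) = P4 R ps h" by (simp add: fun_eq_iff step4 C4_def)
lemma loc5: "P5 R M ps (h(5 := j)) = P5 R M ps h" by (simp add: fun_eq_iff step5 C5_def)
lemma loc6: "P6 R M ps (h(6 := j)) = P6 R M ps h" by (simp add: fun_eq_iff step6 C6_def)
lemma loc7: "P7 R M L ps (h(7 := j)) = P7 R M L ps h" by (simp add: fun_eq_iff step7 C7_def)

lemma rpow: "r * r ^ 0 * r = r ^ 2" "r * (r ^ 2) * (r * r) = r ^ 5" "r * r * r ^ 5 * r = r ^ 8"
  "r * r ^ 8 * (r * r) = r ^ 11" "r * r * r ^ 11 * r = r ^ 14" "r * r ^ 14 * (r * r) = r ^ 17"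
  "r * r ^ 17 * 1 = r ^ 18" "1 * r ^ 18 * 1 = r ^ 18"
  by (simp_all add: numeral_eq_Suc power_Suc mult_ac)

lemma evo0: assumes c: "c \<in> configs (Dv (Suc 0))"
  shows "lapply 0 (Kr R M L 0 h j) (Psi \<psi> R M L 0 h) c = Psi \<psi> R M L (Suc 0) (h(0 := j)) c"
proof -
  have cv: "c 0 < Dout 0" using cfg_lt[OF c] by simp
  have "lapply 0 (Kr R M L 0 h j) (Psi \<psi> R M L 0 h) c = (\<Sum>a<4. (r * t0 (h(0 := j)) (a mod 2) (a div 2 mod 2)) * (1 * S0 (ps_of \<psi>) (c(0 := a))))"
    by (simp add: lapply_Kr[where c = c and v = 0, OF cv] D0_vals nu_def tn_def Psi_def)
  also have "\<dots> = (r * 1) * (\<Sum>a<4. (\<lambda>p0 p1 p2. t0 (h(0 := j)) p0 p1) (a mod 2) (a div 2 mod 2) (a div 4 mod 2) * S0 (ps_of \<psi>) (c(0 := a)))"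
    by (simp add: sum_distrib_left mult_ac)
  also have "\<dots> = (r * 1) * (r * S1 (P1 (ps_of \<psi>) (h(0 := j))) c)"
    by (simp only: st0[where t = "\<lambda>p0 p1 p2. t0 (h(0 := j)) p0 p1"]) (simp add: P1_def fun_eq_iff S1_def)
  also have "\<dots> = Psi \<psi> R M L (Suc 0) (h(0 := j)) c"
    by (simp add: Psi_def; simp add: numeral_eq_Suc power_Suc mult_ac)
  finally show ?thesis .
qed

lemma evo1: assumes c: "c \<in> configs (Dv (Suc 1))"
  shows "lapply 1 (Kr R M L 1 h j) (Psi \<psi> R M L 1 h) c = Psi \<psi> R M L (Suc 1) (h(1 := j)) c"
proof -
  have cv: "c 1 < Dout 1" using cfg_lt[OF c] by simp
  have "lapply 1 (Kr R M L 1 h j) (Psi \<psi> R M L 1 h) c = (\<Sum>a<8. (r * t1 (h(1 := j)) (a mod 2) (a div 2 mod 2) (a div 4 mod 2)) * (r ^ 2 * S1 (P1 (ps_of \<psi>) h) (c(1 := a))))"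
    by (simp add: lapply_Kr[where c = c and v = 1, OF cv] D0_vals nu_def tn_def Psi_def)
  also have "\<dots> = (r * r ^ 2) * (\<Sum>a<8. (\<lambda>p0 p1 p2. t1 (h(1 := j)) p0 p1 p2) (a mod 2) (a div 2 mod 2) (a div 4 mod 2) * S1 (P1 (ps_of \<psi>) h) (c(1 := a)))"
    by (simp add: sum_distrib_left mult_ac)
  also have "\<dots> = (r * r ^ 2) * ((r * r) * S2 (P2 (ps_of \<psi>) (h(1 := j))) c)"
    by (simp only: st1[where t = "\<lambda>p0 p1 p2. t1 (h(1 := j)) p0 p1 p2"]) (simp add: P2_def loc1 fun_eq_iff S2_def)
  also have "\<dots> = Psi \<psi> R M L (Suc 1) (h(1 := j)) c"
    by (simp add: Psi_def; simp add: numeral_eq_Suc power_Suc mult_ac)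
  finally show ?thesis .
qed

lemma evo2: assumes c: "c \<in> configs (Dv (Suc 2))"
  shows "lapply 2 (Kr R M L 2 h j) (Psi \<psi> R M L 2 h) c = Psi \<psi> R M L (Suc 2) (h(2 := j)) c"
proof -
  have cv: "c 2 < Dout 2" using cfg_lt[OF c] by simp
  have "lapply 2 (Kr R M L 2 h j) (Psi \<psi> R M L 2 h) c = (\<Sum>a<8. (r * r * t2 R (h(2 := j)) (a mod 2) (a div 2 mod 2) (a div 4 mod 2)) * (r ^ 5 * S2 (P2 (ps_of \<psi>) h) (c(2 := a))))"
    by (simp add: lapply_Kr[where c = c and v = 2, OF cv] D0_vals nu_def tn_def Psi_def)
  also have "\<dots> = (r * r * r ^ 5) * (\<Sum>a<8. (\<lambda>p0 p1 p2. t2 R (h(2 := j)) p0 p1 p2) (a mod 2) (a div 2 mod 2) (a div 4 mod 2) * S2 (P2 (ps_of \<psi>) h) (c(2 := a)))"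
    by (simp add: sum_distrib_left mult_ac)
  also have "\<dots> = (r * r * r ^ 5) * (r * S3 (P3 R (ps_of \<psi>) (h(2 := j))) c)"
    by (simp only: st2[where t = "\<lambda>p0 p1 p2. t2 R (h(2 := j)) p0 p1 p2"]) (simp add: P3_def loc2 fun_eq_iff S3_def)
  also have "\<dots> = Psi \<psi> R M L (Suc 2) (h(2 := j)) c"
    by (simp add: Psi_def; simp add: numeral_eq_Suc power_Suc mult_ac)
  finally show ?thesis .
qed

lemma evo3: assumes c: "c \<in> configs (Dv (Suc 3))"
  shows "lapply 3 (Kr R M L 3 h j) (Psi \<psi> R M L 3 h) c = Psi \<psi> R M L (Suc 3) (h(3 := j)) c"
proof -
  have cv: "c 3 < Dout 3" using cfg_lt[OF c] by simp
  have "lapply 3 (Kr R M L 3 h j) (Psi \<psi> R M L 3 h) c = (\<Sum>a<8. (r * t3 (h(3 := j)) (a mod 2) (a div 2 mod 2) (a div 4 mod 2)) * (r ^ 8 * S3 (P3 R (ps_of \<psi>) h) (c(3 := a))))"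
    by (simp add: lapply_Kr[where c = c and v = 3, OF cv] D0_vals nu_def tn_def Psi_def)
  also have "\<dots> = (r * r ^ 8) * (\<Sum>a<8. (\<lambda>p0 p1 p2. t3 (h(3 := j)) p0 p1 p2) (a mod 2) (a div 2 mod 2) (a div 4 mod 2) * S3 (P3 R (ps_of \<psi>) h) (c(3 := a)))"
    by (simp add: sum_distrib_left mult_ac)
  also have "\<dots> = (r * r ^ 8) * ((r * r) * S4 (P4 R (ps_of \<psi>) (h(3 := j))) c)"
    by (simp only: st3[where t = "\<lambda>p0 p1 p2. t3 (h(3 := j)) p0 p1 p2"]) (simp add: P4_def loc3 fun_eq_iff S4_def)
  also have "\<dots> = Psi \<psi> R M L (Suc 3) (h(3 := j)) c"
    by (simp add: Psi_def; simp add: numeral_eq_Suc power_Suc mult_ac)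
  finally show ?thesis .
qed

lemma evo4: assumes c: "c \<in> configs (Dv (Suc 4))"
  shows "lapply 4 (Kr R M L 4 h j) (Psi \<psi> R M L 4 h) c = Psi \<psi> R M L (Suc 4) (h(4 := j)) c"
proof -
  have cv: "c 4 < Dout 4" using cfg_lt[OF c] by simp
  have "lapply 4 (Kr R M L 4 h j) (Psi \<psi> R M L 4 h) c = (\<Sum>a<8. (r * r * t4 M (h(4 := j)) (a mod 2) (a div 2 mod 2) (a div 4 mod 2)) * (r ^ 11 * S4 (P4 R (ps_of \<psi>) h) (c(4 := a))))"
    by (simp add: lapply_Kr[where c = c and v = 4, OF cv] D0_vals nu_def tn_def Psi_def)
  also have "\<dots> = (r * r * r ^ 11) * (\<Sum>a<8. (\<lambda>p0 p1 p2. t4 M (h(4 := j)) p0 p1 p2) (a mod 2) (a div 2 mod 2) (a div 4 mod 2) * S4 (P4 R (ps_of \<psi>) h) (c(4 := a)))"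
    by (simp add: sum_distrib_left mult_ac)
  also have "\<dots> = (r * r * r ^ 11) * (r * S5 (P5 R M (ps_of \<psi>) (h(4 := j))) c)"
    by (simp only: st4[where t = "\<lambda>p0 p1 p2. t4 M (h(4 := j)) p0 p1 p2"]) (simp add: P5_def loc4 fun_eq_iff S5_def)
  also have "\<dots> = Psi \<psi> R M L (Suc 4) (h(4 := j)) c"
    by (simp add: Psi_def; simp add: numeral_eq_Suc power_Suc mult_ac)
  finally show ?thesis .
qed

lemma evo5: assumes c: "c \<in> configs (Dv (Suc 5))"
  shows "lapply 5 (Kr R M L 5 h j) (Psi \<psi> R M L 5 h) c = Psi \<psi> R M L (Suc 5) (h(5 := j)) c"
proof -
  have cv: "c 5 < Dout 5" using cfg_lt[OF c] by simp
  have "lapply 5 (Kr R M L 5 h j) (Psi \<psi> R M L 5 h) c = (\<Sum>a<8. (r * t5 (h(5 := j)) (a mod 2) (a div 2 mod 2) (a div 4 mod 2)) * (r ^ 14 * S5 (P5 R M (ps_of \<psi>) h) (c(5 := a))))"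
    by (simp add: lapply_Kr[where c = c and v = 5, OF cv] D0_vals nu_def tn_def Psi_def)
  also have "\<dots> = (r * r ^ 14) * (\<Sum>a<8. (\<lambda>p0 p1 p2. t5 (h(5 := j)) p0 p1 p2) (a mod 2) (a div 2 mod 2) (a div 4 mod 2) * S5 (P5 R M (ps_of \<psi>) h) (c(5 := a)))"
    by (simp add: sum_distrib_left mult_ac)
  also have "\<dots> = (r * r ^ 14) * ((r * r) * S6 (P6 R M (ps_of \<psi>) (h(5 := j))) c)"
    by (simp only: st5[where t = "\<lambda>p0 p1 p2. t5 (h(5 := j)) p0 p1 p2"]) (simp add: P6_def loc5 fun_eq_iff S6_def)
  also have "\<dots> = Psi \<psi> R M L (Suc 5) (h(5 := j)) c"
    by (simp add: Psi_def; simp add: numeral_eq_Suc power_Suc mult_ac)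
  finally show ?thesis .
qed

lemma evo6: assumes c: "c \<in> configs (Dv (Suc 6))"
  shows "lapply 6 (Kr R M L 6 h j) (Psi \<psi> R M L 6 h) c = Psi \<psi> R M L (Suc 6) (h(6 := j)) c"
proof -
  have cv: "c 6 < Dout 6" using cfg_lt[OF c] by simp
  have "lapply 6 (Kr R M L 6 h j) (Psi \<psi> R M L 6 h) c = (\<Sum>a<4. (r * t6 L (h(6 := j)) (c 6) (a mod 2) (a div 2 mod 2)) * (r ^ 17 * S6 (P6 R M (ps_of \<psi>) h) (c(6 := a))))"
    by (simp add: lapply_Kr[where c = c and v = 6, OF cv] D0_vals nu_def tn_def Psi_def)
  also have "\<dots> = (r * r ^ 17) * (\<Sum>a<4. (\<lambda>p0 p1 p2. t6 L (h(6 := j)) (c 6) p0 p1) (a mod 2) (a div 2 mod 2) (a div 4 mod 2) * S6 (P6 R M (ps_of \<psi>) h) (c(6 := a)))"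
    by (simp add: sum_distrib_left mult_ac)
  also have "\<dots> = (r * r ^ 17) * (1 * S7 (P7 R M L (ps_of \<psi>) (h(6 := j))) c)"
    by (simp only: st6[where t = "\<lambda>p0 p1 p2. t6 L (h(6 := j)) (c 6) p0 p1"]) (simp add: P7_def loc6 fun_eq_iff S7_def)
  also have "\<dots> = Psi \<psi> R M L (Suc 6) (h(6 := j)) c"
    by (simp add: Psi_def; simp add: numeral_eq_Suc power_Suc mult_ac)
  finally show ?thesis .
qed

lemma evo7: assumes c: "c \<in> configs (Dv (Suc 7))"
  shows "lapply 7 (Kr R M L 7 h j) (Psi \<psi> R M L 7 h) c = Psi \<psi> R M L (Suc 7) (h(7 := j)) c"
proof -
  have cv: "c 7 < Dout 7" using cfg_lt[OF c] by simp
  have "lapply 7 (Kr R M L 7 h j) (Psi \<psi> R M L 7 h) c = (\<Sum>a<2. (1 * t7 (h(7 := j)) (c 7) (a mod 2)) * (r ^ 18 * S7 (P7 R M L (ps_of \<psi>) h) (c(7 := a))))"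
    by (simp add: lapply_Kr[where c = c and v = 7, OF cv] D0_vals nu_def tn_def Psi_def)
  also have "\<dots> = (1 * r ^ 18) * (\<Sum>a<2. (\<lambda>p0 p1 p2. t7 (h(7 := j)) (c 7) p0) (a mod 2) (a div 2 mod 2) (a div 4 mod 2) * S7 (P7 R M L (ps_of \<psi>) h) (c(7 := a)))"
    by (simp add: sum_distrib_left mult_ac)
  also have "\<dots> = (1 * r ^ 18) * (1 * S8 (P8 R M L (ps_of \<psi>) (h(7 := j))) c)"
    by (simp only: st7[where t = "\<lambda>p0 p1 p2. t7 (h(7 := j)) (c 7) p0"]) (simp add: P8_def loc7 fun_eq_iff S8_def)
  also have "\<dots> = Psi \<psi> R M L (Suc 7) (h(7 := j)) c"
    by (simp add: Psi_def; simp add: numeral_eq_Suc power_Suc mult_ac)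
  finally show ?thesis .
qed

lemma fin8: fixes L M R :: fam
  assumes y: "y1 < 2" "y2 < 2" and d: "dim_vec \<psi> = 4" and U4: "U \<in> carrier_mat 4 4"
  and dec: "\<forall>y1<2. \<forall>y2<2. \<forall>a<2. \<forall>b<2. U $$ (2*y1+y2, 2*a+b) = (\<Sum>q<2. L y2 y1 q * M q y2 b * R b q a)"
  shows "C8 R M L (ps_of \<psi>) y1 y2 = (U *\<^sub>v \<psi>) $ (2 * y1 + y2)"
proof -
  have i: "2 * y1 + y2 < dim_row U" using y U4 by simp
  have "(U *\<^sub>v \<psi>) $ (2 * y1 + y2) = (\<Sum>k\<in>{0..<4}. U $$ (2 * y1 + y2, k) * \<psi> $ k)"
    using i U4 d by (simp add: scalar_prod_def)
  also have "\<dots> = U $$ (2 * y1 + y2, 2*0+0) * \<psi> $ 0 + U $$ (2 * y1 + y2, 2*0+1) * \<psi> $ 1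
      + U $$ (2 * y1 + y2, 2*1+0) * \<psi> $ 2 + U $$ (2 * y1 + y2, 2*1+1) * \<psi> $ 3"
    by (simp add: atLeast0LessThan sum4)
  also have "\<dots> = C8 R M L (ps_of \<psi>) y1 y2"
  proof -
    have D: "\<And>a b. a < 2 \<Longrightarrow> b < 2 \<Longrightarrow> U $$ (2*y1+y2, 2*a+b) = (\<Sum>q<2. L y2 y1 q * M q y2 b * R b q a)"
      using dec y by blast
    show ?thesis using D[of 0 0] D[of 0 1] D[of 1 0] D[of 1 1]
      by (simp add: C8_def ps_of_def sum2 algebra_simps numeral_eq_Suc One_nat_def)
  qed
  finally show ?thesis by simp
qed

lemma prodMo: "(\<Prod>w\<in>{0..<8}. complex_of_nat (Mo w)) = 262144"
proof -
  have "{0..<8::nat} = {0,1,2,3,4,5,6,7}" by auto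
  then show ?thesis by (simp add: Mo_def)
qed

lemma gg: "262144 * r ^ 36 = 1"
proof -
  have "r ^ 36 = (r * r) ^ 18" by (simp add: power_mult_distrib flip: power_add)
  then show ?thesis by (simp add: r2 power_divide) (simp add: mult.commute)
qed

lemma main_decomp: fixes L M R :: fam
  assumes UR: "\<forall>c<2. unit2 (R c)" and UM: "\<forall>c<2. unit2 (M c)" and UL: "\<forall>c<2. unit2 (L c)"
    and U4: "U \<in> carrier_mat 4 4"
    and dec: "\<forall>y1<2. \<forall>y2<2. \<forall>a<2. \<forall>b<2. U $$ (2*y1+y2, 2*a+b) = (\<Sum>q<2. L y2 y1 q * M q y2 b * R b q a)"
  shows "det_implementable U"
proof -
  have C: "\<forall>v<8. \<forall>h. complete (Mo v) (D0 v) (Dout v) (Kr R M L v h)"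
    using Kr_complete[OF UR UM UL] by blast
  define \<Lambda> where "\<Lambda> = prot Mo (Kr R M L) 8 0 (\<lambda>_. 0)"
  have L: "locc D0 Dout \<Lambda>" unfolding \<Lambda>_def using prot_locc[OF C, of 8 0] by (simp add: Dv_0)
  have V: "\<Lambda> (rho0 \<psi>) c c' = (U *\<^sub>v \<psi>) $ out_idx c * cnj ((U *\<^sub>v \<psi>) $ out_idx c')"
    if d: "dim_vec \<psi> = 4" and c: "c \<in> configs Dout" and c': "c' \<in> configs Dout" for \<psi> c c'
  proof -
    have r0: "rho0 \<psi> = pure (Psi \<psi> R M L 0 (\<lambda>_. 0))"
      by (simp add: rho0_def pure_def Psi_def init_S0 ps_of_def[abs_def])
    have S: "lapply v (Kr R M L v h j) (Psi \<psi> R M L v h) c = Psi \<psi> R M L (Suc v) (h(v := j)) c"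
      if "v < 8" "j < Mo v" "c \<in> configs (Dv (Suc v))" for v h j c
      using lt8[OF that(1)] that(3)
      by (elim disjE) (simp_all add: evo0 evo1 evo2 evo3 evo4 evo5 evo6 evo7)
    have F: "Psi \<psi> R M L 8 h c = r ^ 18 * (U *\<^sub>v \<psi>) $ out_idx c" if "c \<in> configs Dout" for h c
    proof -
      have "c 6 < Dout 6" "c 7 < Dout 7" using that by (auto simp: configs_def num_nodes_def)
      then have y: "c 6 < 2" "c 7 < 2" by (simp_all add: Dout_def)
      show ?thesis using fin8[OF y d U4 dec] step8[OF y(2)]
        by (simp add: Psi_def S8_def out_idx_def)
    qed
    have "\<Lambda> (rho0 \<psi>) c c' = (\<Prod>w\<in>{0..<8}. complex_of_nat (Mo w)) * (r ^ 18 * cnj (r ^ 18))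
        * ((U *\<^sub>v \<psi>) $ out_idx c * cnj ((U *\<^sub>v \<psi>) $ out_idx c'))"
      unfolding \<Lambda>_def r0
      by (rule prot_eval[OF C, where \<Psi> = "Psi \<psi> R M L" and g = "r ^ 18" and T = "\<lambda>c. (U *\<^sub>v \<psi>) $ out_idx c"])
        (use S F c c' in auto)
    then show ?thesis by (simp add: prodMo gg)
  qed
  show ?thesis unfolding det_implementable_def using L V by blast
qed

type_synonym m4 = "nat \<Rightarrow> nat \<Rightarrow> complex"

definition mm :: "m4 \<Rightarrow> m4 \<Rightarrow> m4" where "mm A N = (\<lambda>i k. \<Sum>j<4. A i j * N j k)"
definition adj :: "m4 \<Rightarrow> m4" where "adj A = (\<lambda>i k. cnj (A k i))"
definition idm :: m4 where "idm = (\<lambda>i k. if i = k then 1 else 0)"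
definition eq4 :: "m4 \<Rightarrow> m4 \<Rightarrow> bool" where "eq4 A N \<longleftrightarrow> (\<forall>i<4. \<forall>k<4. A i k = N i k)"
definition cu :: "m4 \<Rightarrow> bool" where "cu A \<longleftrightarrow> eq4 (mm (adj A) A) idm"
definition ru :: "m4 \<Rightarrow> bool" where "ru A \<longleftrightarrow> eq4 (mm A (adj A)) idm"

lemma mm_assoc: "mm (mm A N) C = mm A (mm N C)"
proof (intro ext)
  fix i k
  have "mm (mm A N) C i k = (\<Sum>j<4. \<Sum>l<4. A i l * N l j * C j k)" by (simp add: mm_def sum_distrib_right)
  also have "\<dots> = (\<Sum>l<4. \<Sum>j<4. A i l * N l j * C j k)" by (rule sum.swap)
  also have "\<dots> = mm A (mm N C) i k" by (simp add: mm_def sum_distrib_left mult_ac)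
  finally show "mm (mm A N) C i k = mm A (mm N C) i k" .
qed

lemma adj_mm: "adj (mm A N) = mm (adj N) (adj A)"
  unfolding mm_def adj_def by (intro ext) (simp add: mult_ac)

lemma adj_adj: "adj (adj A) = A" unfolding adj_def by simp

lemma eq4_refl: "eq4 A A" by (simp add: eq4_def)
lemma eq4_sym: "eq4 A N \<Longrightarrow> eq4 N A" by (simp add: eq4_def)
lemma eq4_trans: "eq4 A N \<Longrightarrow> eq4 N C \<Longrightarrow> eq4 A C" by (simp add: eq4_def)

lemma mm_cong: "eq4 A A' \<Longrightarrow> eq4 N N' \<Longrightarrow> eq4 (mm A N) (mm A' N')"
  unfolding eq4_def mm_def by (auto intro!: sum.cong)

lemma mm_idm_l: "eq4 (mm idm A) A"
  unfolding eq4_def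
proof (intro allI impI)
  fix i k :: nat assume i: "i < 4"
  have "mm idm A i k = (\<Sum>j<4. if j = i then A j k else 0)"
    unfolding mm_def idm_def by (intro sum.cong) auto
  then show "mm idm A i k = A i k" using i by simp
qed

lemma mm_idm_r: "eq4 (mm A idm) A"
  unfolding eq4_def
proof (intro allI impI)
  fix i k :: nat assume k: "k < 4"
  have "mm A idm i k = (\<Sum>j<4. if j = k then A i j else 0)"
    unfolding mm_def idm_def by (intro sum.cong) auto
  then show "mm A idm i k = A i k" using k by simp
qed

lemma cu_mm: assumes "cu A" "cu N" shows "cu (mm A N)"
proof -
  have "mm (adj (mm A N)) (mm A N) = mm (adj N) (mm (mm (adj A) A) N)"
    by (simp add: adj_mm mm_assoc)
  moreover have "eq4 (mm (adj N) (mm (mm (adj A) A) N)) (mm (adj N) (mm idm N))"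
    using assms(1) by (intro mm_cong eq4_refl) (simp add: cu_def)
  moreover have "eq4 (mm (adj N) (mm idm N)) (mm (adj N) N)"
    by (intro mm_cong eq4_refl mm_idm_l)
  ultimately show ?thesis using assms(2) unfolding cu_def by (metis eq4_trans)
qed

lemma cu_adj: "ru A \<Longrightarrow> cu (adj A)" by (simp add: cu_def ru_def adj_adj)

lemma recover:
  assumes "ru P" "ru G" "ru W"
  shows "eq4 (mm P (mm G (mm (mm (adj G) (mm (adj P) (mm U W))) (adj W)))) U"
proof -
  have e: "mm P (mm G (mm (mm (adj G) (mm (adj P) (mm U W))) (adj W)))
     = mm (mm P (mm (mm G (adj G)) (adj P))) (mm U (mm W (adj W)))"
    by (simp add: mm_assoc)
  have "eq4 (mm (mm P (mm (mm G (adj G)) (adj P))) (mm U (mm W (adj W)))) (mm (mm P (mm idm (adj P))) (mm U idm))"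
    using assms by (intro mm_cong eq4_refl) (simp_all add: ru_def)
  moreover have "eq4 (mm (mm P (mm idm (adj P))) (mm U idm)) (mm (mm P (adj P)) U)"
    by (intro mm_cong eq4_refl mm_idm_l mm_idm_r)
  moreover have "eq4 (mm (mm P (adj P)) U) (mm idm U)"
    using assms by (intro mm_cong eq4_refl) (simp add: ru_def)
  ultimately show ?thesis unfolding e by (metis eq4_trans mm_idm_l)
qed

definition C2 :: "(nat \<Rightarrow> nat \<Rightarrow> nat \<Rightarrow> complex) \<Rightarrow> m4" where
  "C2 F = (\<lambda>i k. if i mod 2 = k mod 2 then F (i mod 2) (i div 2) (k div 2) else 0)"
definition C1 :: "(nat \<Rightarrow> nat \<Rightarrow> nat \<Rightarrow> complex) \<Rightarrow> m4" where
  "C1 F = (\<lambda>i k. if i div 2 = k div 2 then F (i div 2) (i mod 2) (k mod 2) else 0)"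
definition runit2 :: "(nat \<Rightarrow> nat \<Rightarrow> complex) \<Rightarrow> bool" where
  "runit2 A \<longleftrightarrow> (\<forall>x<2. \<forall>x'<2. (\<Sum>q<2. A x q * cnj (A x' q)) = ind (x = x'))"

lemma unit2_exp: "unit2 A \<Longrightarrow> cnj (A 0 0) * A 0 0 + cnj (A 1 0) * A 1 0 = 1 \<and>
   cnj (A 0 0) * A 0 1 + cnj (A 1 0) * A 1 1 = 0 \<and> cnj (A 0 1) * A 0 0 + cnj (A 1 1) * A 1 0 = 0 \<and>
   cnj (A 0 1) * A 0 1 + cnj (A 1 1) * A 1 1 = 1"
  unfolding unit2_def by (auto simp: sum2 ind_def dest: spec[of _ 0] spec[of _ 1])

lemma runit2_exp: "runit2 A \<Longrightarrow> A 0 0 * cnj (A 0 0) + A 0 1 * cnj (A 0 1) = 1 \<and>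
   A 0 0 * cnj (A 1 0) + A 0 1 * cnj (A 1 1) = 0 \<and> A 1 0 * cnj (A 0 0) + A 1 1 * cnj (A 0 1) = 0 \<and>
   A 1 0 * cnj (A 1 0) + A 1 1 * cnj (A 1 1) = 1"
  unfolding runit2_def by (auto simp: sum2 ind_def dest: spec[of _ 0] spec[of _ 1])

lemma unit2_intro: "cnj (A 0 0) * A 0 0 + cnj (A 1 0) * A 1 0 = 1 \<Longrightarrow>
   cnj (A 0 0) * A 0 1 + cnj (A 1 0) * A 1 1 = 0 \<Longrightarrow> cnj (A 0 1) * A 0 0 + cnj (A 1 1) * A 1 0 = 0 \<Longrightarrow>
   cnj (A 0 1) * A 0 1 + cnj (A 1 1) * A 1 1 = 1 \<Longrightarrow> unit2 A"
  unfolding unit2_def by (auto simp: sum2 ind_def dest!: bit_cases)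

lemma runit2_intro: "A 0 0 * cnj (A 0 0) + A 0 1 * cnj (A 0 1) = 1 \<Longrightarrow>
   A 0 0 * cnj (A 1 0) + A 0 1 * cnj (A 1 1) = 0 \<Longrightarrow> A 1 0 * cnj (A 0 0) + A 1 1 * cnj (A 0 1) = 0 \<Longrightarrow>
   A 1 0 * cnj (A 1 0) + A 1 1 * cnj (A 1 1) = 1 \<Longrightarrow> runit2 A"
  unfolding runit2_def by (auto simp: sum2 ind_def dest!: bit_cases)

lemma ru_C2: assumes "runit2 (F 0)" "runit2 (F 1)" shows "ru (C2 F)"
  unfolding ru_def eq4_def
proof (intro allI impI)
  fix i k :: nat assume ik: "i < 4" "k < 4"
  then show "mm (C2 F) (adj (C2 F)) i k = idm i k"
    using runit2_exp[OF assms(1)] runit2_exp[OF assms(2)] lt4[OF ik(1)] lt4[OF ik(2)]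
    by (elim disjE) (simp_all add: mm_def adj_def C2_def idm_def sum4)
qed

lemma ru_C1: assumes "runit2 (F 0)" "runit2 (F 1)" shows "ru (C1 F)"
  unfolding ru_def eq4_def
proof (intro allI impI)
  fix i k :: nat assume ik: "i < 4" "k < 4"
  then show "mm (C1 F) (adj (C1 F)) i k = idm i k"
    using runit2_exp[OF assms(1)] runit2_exp[OF assms(2)] lt4[OF ik(1)] lt4[OF ik(2)]
    by (elim disjE) (simp_all add: mm_def adj_def C1_def idm_def sum4)
qed

lemma cu_C2: assumes "unit2 (F 0)" "unit2 (F 1)" shows "cu (C2 F)"
  unfolding cu_def eq4_def
proof (intro allI impI)
  fix i k :: nat assume ik: "i < 4" "k < 4"
  then show "mm (adj (C2 F)) (C2 F) i k = idm i k"
    using unit2_exp[OF assms(1)] unit2_exp[OF assms(2)] lt4[OF ik(1)] lt4[OF ik(2)]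
    by (elim disjE) (simp_all add: mm_def adj_def C2_def idm_def sum4)
qed

definition perp :: "(nat \<Rightarrow> complex) \<Rightarrow> nat \<Rightarrow> complex" where
  "perp x = (\<lambda>i. if i = 0 then - cnj (x 1) else cnj (x 0))"
definition Qm :: "(nat \<Rightarrow> complex) \<Rightarrow> nat \<Rightarrow> nat \<Rightarrow> complex" where
  "Qm x = (\<lambda>i j. if j = 0 then x i else perp x i)"
definition nrm :: "(nat \<Rightarrow> complex) \<Rightarrow> bool" where
  "nrm x \<longleftrightarrow> cnj (x 0) * x 0 + cnj (x 1) * x 1 = 1"
definition ip :: "(nat \<Rightarrow> complex) \<Rightarrow> (nat \<Rightarrow> complex) \<Rightarrow> complex" where
  "ip x y = cnj (x 0) * y 0 + cnj (x 1) * y 1"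
definition mv :: "(nat \<Rightarrow> nat \<Rightarrow> complex) \<Rightarrow> (nat \<Rightarrow> complex) \<Rightarrow> nat \<Rightarrow> complex" where
  "mv A x = (\<lambda>i. A i 0 * x 0 + A i 1 * x 1)"

lemma Q_unit: assumes "nrm x" shows "unit2 (Qm x)" "runit2 (Qm x)"
  using assms
  by (auto intro!: unit2_intro runit2_intro simp: Qm_def perp_def nrm_def algebra_simps)

definition Mm :: "complex \<Rightarrow> complex \<Rightarrow> nat \<Rightarrow> nat \<Rightarrow> complex" where
  "Mm s t = (\<lambda>y b. if y = 0 then (if b = 0 then s else - cnj t) else (if b = 0 then t else cnj s))"

lemma M_unit: assumes "cnj s * s + cnj t * t = 1" shows "unit2 (Mm s t)" "runit2 (Mm s t)"
  using assms
  by (auto intro!: unit2_intro runit2_intro simp: Mm_def algebra_simps)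

lemma cmod_sq: "cnj z * z = complex_of_real ((cmod z)\<^sup>2)"
  by (metis complex_norm_square mult.commute)

lemma exists_v: "\<exists>v. nrm v \<and> ip (mv A v) (mv A (perp v)) = 0"
proof -
  define p where "p = cnj (A 0 0) * A 0 0 + cnj (A 1 0) * A 1 0"
  define rr where "rr = cnj (A 0 1) * A 0 1 + cnj (A 1 1) * A 1 1"
  define q where "q = cnj (A 0 0) * A 0 1 + cnj (A 1 0) * A 1 1"
  have key: "ip (mv A v) (mv A (perp v)) = q * cnj (v 0) * cnj (v 0) - cnj q * cnj (v 1) * cnj (v 1)
      + (rr - p) * cnj (v 0) * cnj (v 1)" for v
    by (simp add: ip_def mv_def perp_def p_def rr_def q_def algebra_simps)
  define pr where "pr = (cmod (A 0 0))\<^sup>2 + (cmod (A 1 0))\<^sup>2"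
  define rr' where "rr' = (cmod (A 0 1))\<^sup>2 + (cmod (A 1 1))\<^sup>2"
  have pR: "p = complex_of_real pr" by (simp add: p_def pr_def cmod_sq)
  have rR: "rr = complex_of_real rr'" by (simp add: rr_def rr'_def cmod_sq)
  show ?thesis
  proof (cases "q = 0")
    case True
    let ?v = "\<lambda>i::nat. if i = 0 then (1::complex) else 0"
    have "nrm ?v" by (simp add: nrm_def)
    moreover have "ip (mv A ?v) (mv A (perp ?v)) = 0" by (simp add: key True)
    ultimately show ?thesis by blast
  next
    case False
    define \<delta> where "\<delta> = pr - rr'"
    define d where "d = sqrt (\<delta>\<^sup>2 + 4 * (cmod q)\<^sup>2)"
    define z where "z = complex_of_real (\<delta> + d) / (2 * q)"
    define n where "n = sqrt ((cmod z)\<^sup>2 + 1)"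
    have d2: "d\<^sup>2 = \<delta>\<^sup>2 + 4 * (cmod q)\<^sup>2" unfolding d_def by simp
    have qq: "q * cnj q = complex_of_real ((cmod q)\<^sup>2)" by (metis complex_norm_square)
    have quad: "q * z * z - cnj q + (rr - p) * z = 0"
    proof -
      have "q * z * z - cnj q + (rr - p) * z
          = (complex_of_real ((\<delta> + d)\<^sup>2 - 2 * \<delta> * (\<delta> + d)) - 4 * (q * cnj q)) / (4 * q)"
        unfolding z_def pR rR \<delta>_def using False
        by (simp add: field_simps power2_eq_square)
      also have "complex_of_real ((\<delta> + d)\<^sup>2 - 2 * \<delta> * (\<delta> + d)) = complex_of_real (4 * (cmod q)\<^sup>2)"
        using d2 by (simp add: power2_eq_square algebra_simps)
      finally show ?thesis by (simp add: qq)
    qed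
    have n0: "n > 0" unfolding n_def by (intro real_sqrt_gt_zero add_nonneg_pos) simp_all
    have n2: "complex_of_real n * complex_of_real n = complex_of_real ((cmod z)\<^sup>2) + 1"
      unfolding n_def by (simp flip: of_real_mult)
    let ?v = "\<lambda>i::nat. if i = 0 then cnj z / complex_of_real n else 1 / complex_of_real n"
    have "nrm ?v"
    proof -
      have "cnj (?v 0) * ?v 0 + cnj (?v 1) * ?v 1 = (cnj z * z + 1) / (complex_of_real n * complex_of_real n)"
        using n0 by (simp add: field_simps)
      also have "\<dots> = 1"
      proof -
        have "complex_of_real n * complex_of_real n \<noteq> 0" using n0 by simp
        then show ?thesis by (simp add: n2 cmod_sq)
      qed
      finally show ?thesis by (simp add: nrm_def)
    qed
    moreover have "ip (mv A ?v) (mv A (perp ?v)) = 0"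
    proof -
      have "ip (mv A ?v) (mv A (perp ?v)) = (q * z * z - cnj q + (rr - p) * z) / (complex_of_real n * complex_of_real n)"
        using n0 by (simp add: key field_simps)
      then show ?thesis by (simp add: quad)
    qed
    ultimately show ?thesis by blast
  qed
qed

lemma exists_u: assumes o: "ip a0 a1 = 0"
  shows "\<exists>u. nrm u \<and> ip u a1 = 0 \<and> ip (perp u) a0 = 0"
proof (cases "a1 0 = 0 \<and> a1 1 = 0")
  case False
  define N where "N = (cmod (a1 0))\<^sup>2 + (cmod (a1 1))\<^sup>2"
  have N0: "N > 0" using False unfolding N_def
    by (auto simp: add_pos_nonneg add_nonneg_pos)
  define n where "n = sqrt N"
  have n0: "n > 0" using N0 by (simp add: n_def)
  have n2: "complex_of_real n * complex_of_real n = cnj (a1 0) * a1 0 + cnj (a1 1) * a1 1"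
    using N0 unfolding n_def N_def by (simp flip: of_real_mult add: cmod_sq)
  let ?u = "\<lambda>i. perp a1 i / complex_of_real n"
  have "nrm ?u"
  proof -
    have "cnj (?u 0) * ?u 0 + cnj (?u 1) * ?u 1 = (cnj (a1 0) * a1 0 + cnj (a1 1) * a1 1) / (complex_of_real n * complex_of_real n)"
      using n0 by (simp add: perp_def field_simps)
    also have "\<dots> = 1" using n0 by (simp add: n2[symmetric])
    finally show ?thesis by (simp add: nrm_def)
  qed
  moreover have "ip ?u a1 = 0" using n0 by (simp add: ip_def perp_def field_simps)
  moreover have "ip (perp ?u) a0 = 0"
  proof -
    have "ip (perp ?u) a0 = - cnj (ip a0 a1) / complex_of_real n"
      using n0 by (simp add: ip_def perp_def field_simps)
    then show ?thesis using o by simp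
  qed
  ultimately show ?thesis by blast
next
  case True
  show ?thesis
  proof (cases "a0 0 = 0 \<and> a0 1 = 0")
    case True2: True
    let ?u = "\<lambda>i::nat. if i = 0 then (1::complex) else 0"
    have "nrm ?u" by (simp add: nrm_def)
    moreover have "ip ?u a1 = 0" "ip (perp ?u) a0 = 0" using True True2 by (simp_all add: ip_def perp_def)
    ultimately show ?thesis by blast
  next
    case False
    define N where "N = (cmod (a0 0))\<^sup>2 + (cmod (a0 1))\<^sup>2"
    have N0: "N > 0" using False unfolding N_def
      by (auto simp: add_pos_nonneg add_nonneg_pos)
    define n where "n = sqrt N"
    have n0: "n > 0" using N0 by (simp add: n_def)
    have n2: "complex_of_real n * complex_of_real n = cnj (a0 0) * a0 0 + cnj (a0 1) * a0 1"
      using N0 unfolding n_def N_def by (simp flip: of_real_mult add: cmod_sq)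
    let ?u = "\<lambda>i. a0 i / complex_of_real n"
    have "nrm ?u"
    proof -
      have "cnj (?u 0) * ?u 0 + cnj (?u 1) * ?u 1 = (cnj (a0 0) * a0 0 + cnj (a0 1) * a0 1) / (complex_of_real n * complex_of_real n)"
        using n0 by (simp add: field_simps)
      also have "\<dots> = 1" using n0 by (simp add: n2[symmetric])
      finally show ?thesis by (simp add: nrm_def)
    qed
    moreover have "ip ?u a1 = 0" using True by (simp add: ip_def)
    moreover have "ip (perp ?u) a0 = 0" using n0 by (simp add: ip_def perp_def field_simps)
    ultimately show ?thesis by blast
  qed
qed

definition id2 :: "nat \<Rightarrow> nat \<Rightarrow> complex" where "id2 = (\<lambda>x a. if x = a then 1 else 0)"

lemma id2_unit: "unit2 id2" "runit2 id2"
  by (auto intro!: unit2_intro runit2_intro simp: id2_def)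

lemma runit2_adj: "runit2 A \<Longrightarrow> unit2 (\<lambda>q a. cnj (A a q))"
  by (drule runit2_exp) (auto intro!: unit2_intro simp: mult.commute)

lemma prod_formula:
  assumes "y1 < 2" "y2 < 2" "a < 2" "b < 2"
  shows "mm (C2 F) (mm (C1 G) (C2 H)) (2*y1+y2) (2*a+b) = (\<Sum>q<2. F y2 y1 q * G q y2 b * H b q a)"
  using bit_cases[OF assms(1)] bit_cases[OF assms(2)] bit_cases[OF assms(3)] bit_cases[OF assms(4)]
  by (elim disjE) (simp_all add: mm_def C2_def C1_def sum4 sum2)

lemma adj_entry: assumes "U \<in> carrier_mat 4 4" "i < 4" "j < 4"
  shows "mat_adjoint U $$ (i, j) = cnj (U $$ (j, i))"
  using assms by (simp add: mat_adjoint_def mat_of_rows_def)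

lemma cu_of_unitary: assumes "unitary_mat U 4" shows "cu (\<lambda>i k. U $$ (i, k))"
proof -
  have U: "U \<in> carrier_mat 4 4" and I: "mat_adjoint U * U = 1\<^sub>m 4" using assms by (auto simp: unitary_mat_def)
  have da: "dim_row (mat_adjoint U) = 4" "dim_col (mat_adjoint U) = 4" using U by (simp_all add: mat_adjoint_def)
  show ?thesis unfolding cu_def eq4_def
  proof (intro allI impI)
    fix i k :: nat assume ik: "i < 4" "k < 4"
    have "(mat_adjoint U * U) $$ (i, k) = (\<Sum>j<4. mat_adjoint U $$ (i, j) * U $$ (j, k))"
      using ik U da by (simp add: scalar_prod_def atLeast0LessThan)
    also have "\<dots> = mm (adj (\<lambda>i k. U $$ (i, k))) (\<lambda>i k. U $$ (i, k)) i k"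
      unfolding mm_def adj_def using ik U by (intro sum.cong) (simp_all add: adj_entry)
    finally show "mm (adj (\<lambda>i k. U $$ (i, k))) (\<lambda>i k. U $$ (i, k)) i k = idm i k"
      using I ik by (simp add: idm_def)
  qed
qed

lemma decomp:
  assumes UU: "unitary_mat U 4"
  shows "\<exists>L M R :: fam. (\<forall>c<2. unit2 (R c)) \<and> (\<forall>c<2. unit2 (M c)) \<and> (\<forall>c<2. unit2 (L c)) \<and>
    (\<forall>y1<2. \<forall>y2<2. \<forall>a<2. \<forall>b<2. U $$ (2*y1+y2, 2*a+b) = (\<Sum>q<2. L y2 y1 q * M q y2 b * R b q a))"
proof -
  define u where "u = (\<lambda>i k. U $$ (i, k))"
  have cuU: "cu u" unfolding u_def by (rule cu_of_unitary[OF UU])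
  define A2 where "A2 = (\<lambda>x a. u (2*x) (2*a))"
  obtain v where v: "nrm v" "ip (mv A2 v) (mv A2 (perp v)) = 0" using exists_v by blast
  define W where "W = Qm v"
  have WU: "unit2 W" "runit2 W" unfolding W_def using Q_unit[OF v(1)] by auto
  define Fw where "Fw = (\<lambda>c::nat. if c = 0 then W else id2)"
  define PW where "PW = C2 Fw"
  have cuPW: "cu PW" unfolding PW_def by (rule cu_C2) (simp_all add: Fw_def WU id2_unit)
  have ruPW: "ru PW" unfolding PW_def by (rule ru_C2) (simp_all add: Fw_def WU id2_unit)
  define X where "X = mm u PW"
  have cuX: "cu X" unfolding X_def using cuU cuPW by (rule cu_mm)
  define \<alpha> where "\<alpha> = (\<lambda>a x. X (2*x) (2*a))"
  define \<gamma> where "\<gamma> = (\<lambda>a x. X (2*x+1) (2*a))"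
  have ipa: "ip (\<alpha> 0) (\<alpha> 1) = 0"
  proof -
    have "ip (\<alpha> 0) (\<alpha> 1) = ip (mv A2 v) (mv A2 (perp v))"
      by (simp add: ip_def \<alpha>_def X_def mm_def PW_def C2_def Fw_def W_def Qm_def mv_def A2_def sum4)
    then show ?thesis using v(2) by simp
  qed
  have ipg: "ip (\<gamma> 0) (\<gamma> 1) = 0"
  proof -
    have "mm (adj X) X 0 2 = idm 0 2" using cuX by (simp add: cu_def eq4_def)
    then have "ip (\<alpha> 0) (\<alpha> 1) + ip (\<gamma> 0) (\<gamma> 1) = 0"
      by (simp add: mm_def adj_def idm_def sum4 ip_def \<alpha>_def \<gamma>_def algebra_simps)
    then show ?thesis using ipa by simp
  qed
  obtain u0 where u0: "nrm u0" "ip u0 (\<alpha> 1) = 0" "ip (perp u0) (\<alpha> 0) = 0" using exists_u[OF ipa] by blast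
  obtain u1 where u1: "nrm u1" "ip u1 (\<gamma> 1) = 0" "ip (perp u1) (\<gamma> 0) = 0" using exists_u[OF ipg] by blast
  define Lf where "Lf = (\<lambda>c::nat. if c = 0 then Qm u0 else Qm u1)"
  have LU: "\<forall>c<2. unit2 (Lf c)" "runit2 (Lf 0)" "runit2 (Lf 1)"
    using Q_unit[OF u0(1)] Q_unit[OF u1(1)] by (auto simp: Lf_def)
  define PL where "PL = C2 Lf"
  have ruPL: "ru PL" unfolding PL_def by (rule ru_C2) (use LU in auto)
  define V where "V = mm (adj PL) X"
  have cuV: "cu V" unfolding V_def by (rule cu_mm[OF cu_adj[OF ruPL] cuX])
  have V0: "V 0 2 = 0" "V 2 0 = 0" "V 1 2 = 0" "V 3 0 = 0"
    using u0(2,3) u1(2,3)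
    by (simp_all add: V_def mm_def adj_def PL_def C2_def Lf_def Qm_def sum4 ip_def \<alpha>_def \<gamma>_def perp_def)
  define \<sigma> where "\<sigma> = (\<lambda>a. V (2*a) (2*a))"
  define \<tau> where "\<tau> = (\<lambda>a. V (2*a+1) (2*a))"
  have Vs: "V 0 0 = \<sigma> 0" "V 2 2 = \<sigma> 1" "V 1 0 = \<tau> 0" "V 3 2 = \<tau> 1"
    by (simp_all add: \<sigma>_def \<tau>_def)
  have nst: "cnj (\<sigma> a) * \<sigma> a + cnj (\<tau> a) * \<tau> a = 1" if a: "a < 2" for a
  proof -
    have "mm (adj V) V 0 0 = idm 0 0" "mm (adj V) V 2 2 = idm 2 2" using cuV by (simp_all add: cu_def eq4_def)
    then show ?thesis using bit_cases[OF a] V0 Vs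
      by (elim disjE) (simp_all add: mm_def adj_def idm_def sum4)
  qed
  define Mf where "Mf = (\<lambda>a. Mm (\<sigma> a) (\<tau> a))"
  have MU: "\<forall>c<2. unit2 (Mf c)" "runit2 (Mf 0)" "runit2 (Mf 1)"
    using M_unit[OF nst] by (auto simp: Mf_def)
  define G0 where "G0 = C1 Mf"
  have ruG: "ru G0" unfolding G0_def by (rule ru_C1) (use MU in auto)
  define K where "K = mm (adj G0) V"
  have cuK: "cu K" unfolding K_def by (rule cu_mm[OF cu_adj[OF ruG] cuV])
  have n0: "cnj (\<sigma> 0) * \<sigma> 0 + cnj (\<tau> 0) * \<tau> 0 = 1" "cnj (\<sigma> 1) * \<sigma> 1 + cnj (\<tau> 1) * \<tau> 1 = 1"
    using nst[of 0] nst[of 1] by simp_all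
  have Kent: "K i k = (\<Sum>j<4. cnj (G0 j i) * V j k)" for i k by (simp add: K_def mm_def adj_def)
  have G0e: "G0 0 0 = \<sigma> 0" "G0 0 1 = - cnj (\<tau> 0)" "G0 1 0 = \<tau> 0" "G0 1 1 = cnj (\<sigma> 0)"
    "G0 2 2 = \<sigma> 1" "G0 2 3 = - cnj (\<tau> 1)" "G0 3 2 = \<tau> 1" "G0 3 3 = cnj (\<sigma> 1)"
    "G0 0 2 = 0" "G0 0 3 = 0" "G0 1 2 = 0" "G0 1 3 = 0" "G0 2 0 = 0" "G0 2 1 = 0" "G0 3 0 = 0" "G0 3 1 = 0"
    by (simp_all add: G0_def C1_def Mf_def Mm_def)
  have Kc0: "K 0 0 = 1" "K 1 0 = 0" "K 2 0 = 0" "K 3 0 = 0" "K 0 2 = 0" "K 1 2 = 0" "K 2 2 = 1" "K 3 2 = 0"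
    using n0 by (simp_all add: Kent sum4 G0e V0 Vs algebra_simps)
  have Kc: "K i 0 = idm i 0" "K i 2 = idm i 2" if i: "i < 4" for i
    using lt4[OF i] Kc0 by (auto simp: idm_def)
  have Kz: "K 0 1 = 0" "K 0 3 = 0" "K 2 1 = 0" "K 2 3 = 0"
  proof -
    have e: "mm (adj K) K i k = idm i k" if "i < 4" "k < 4" for i k using cuK that by (simp add: cu_def eq4_def)
    have s: "mm (adj K) K 0 k = K 0 k" "mm (adj K) K 2 k = K 2 k" for k
      using Kc by (simp_all add: mm_def adj_def sum4 idm_def)
    show "K 0 1 = 0" using e[of 0 1] s by (simp add: idm_def)
    show "K 0 3 = 0" using e[of 0 3] s by (simp add: idm_def)
    show "K 2 1 = 0" using e[of 2 1] s by (simp add: idm_def)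
    show "K 2 3 = 0" using e[of 2 3] s by (simp add: idm_def)
  qed
  define Z where "Z = (\<lambda>x a. K (2*x+1) (2*a+1))"
  have ZU: "unit2 Z"
  proof -
    have e: "mm (adj K) K i k = idm i k" if "i < 4" "k < 4" for i k using cuK that by (simp add: cu_def eq4_def)
    show ?thesis
      using e[of 1 1] e[of 1 3] e[of 3 1] e[of 3 3] Kz
      by (intro unit2_intro) (simp_all add: Z_def mm_def adj_def idm_def sum4)
  qed
  define Fk where "Fk = (\<lambda>c::nat. if c = 0 then id2 else Z)"
  have eqK: "eq4 K (C2 Fk)"
    unfolding eq4_def
  proof (intro allI impI)
    fix i k :: nat assume ik: "i < 4" "k < 4"
    show "K i k = C2 Fk i k"
      using lt4[OF ik(1)] lt4[OF ik(2)] Kc[of 0] Kc[of 1] Kc[of 2] Kc[of 3] Kz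
      by (elim disjE) (simp_all add: C2_def Fk_def id2_def Z_def idm_def)
  qed
  define Rf where "Rf = (\<lambda>c::nat. if c = 0 then (\<lambda>q a. cnj (W a q)) else Z)"
  have eqR: "eq4 (mm (C2 Fk) (adj PW)) (C2 Rf)"
    unfolding eq4_def
  proof (intro allI impI)
    fix i k :: nat assume ik: "i < 4" "k < 4"
    show "mm (C2 Fk) (adj PW) i k = C2 Rf i k"
      using lt4[OF ik(1)] lt4[OF ik(2)]
      by (elim disjE) (simp_all add: mm_def adj_def PW_def C2_def Fk_def Fw_def Rf_def id2_def sum4)
  qed
  have RU: "\<forall>c<2. unit2 (Rf c)"
    using runit2_adj[OF WU(2)] ZU by (auto simp: Rf_def dest!: bit_cases)
  have rec: "eq4 (mm PL (mm G0 (mm K (adj PW)))) u"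
    unfolding K_def V_def X_def by (rule recover[OF ruPL ruG ruPW])
  have e2: "eq4 (mm PL (mm G0 (mm K (adj PW)))) (mm PL (mm G0 (C2 Rf)))"
    by (intro mm_cong eq4_refl eq4_trans[OF mm_cong[OF eqK eq4_refl] eqR])
  have fin: "eq4 u (mm PL (mm G0 (C2 Rf)))" using rec e2 by (metis eq4_sym eq4_trans)
  have dec: "U $$ (2*y1+y2, 2*a+b) = (\<Sum>q<2. Lf y2 y1 q * Mf q y2 b * Rf b q a)"
    if "y1 < 2" "y2 < 2" "a < 2" "b < 2" for y1 y2 a b
  proof -
    have "2*y1+y2 < 4" "2*a+b < 4" using that by auto
    then have "U $$ (2*y1+y2, 2*a+b) = mm PL (mm G0 (C2 Rf)) (2*y1+y2) (2*a+b)"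
      using fin by (simp add: eq4_def u_def)
    also have "\<dots> = (\<Sum>q<2. Lf y2 y1 q * Mf q y2 b * Rf b q a)"
      unfolding PL_def G0_def by (rule prod_formula[OF that])
    finally show ?thesis .
  qed
  show ?thesis
    by (intro exI[of _ Lf] exI[of _ Mf] exI[of _ Rf] conjI allI impI) (simp_all add: RU MU(1) LU(1) dec)
qed

theorem mainTheorem5:
  fixes U :: "complex mat"
  assumes "unitary_mat U 4"
  shows "det_implementable U"
proof -
  from decomp[OF assms] obtain L M R :: fam where A: "(\<forall>c<2. unit2 (R c)) \<and> (\<forall>c<2. unit2 (M c)) \<and> (\<forall>c<2. unit2 (L c)) \<and>
    (\<forall>y1<2. \<forall>y2<2. \<forall>a<2. \<forall>b<2. U $$ (2*y1+y2, 2*a+b) = (\<Sum>q<2. L y2 y1 q * M q y2 b * R b q a))"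
    by blast
  have U4: "U \<in> carrier_mat 4 4" using assms by (simp add: unitary_mat_def)
  show ?thesis
    by (rule main_decomp[OF conjunct1[OF A] conjunct1[OF conjunct2[OF A]] conjunct1[OF conjunct2[OF conjunct2[OF A]]]
      U4 conjunct2[OF conjunct2[OF conjunct2[OF A]]]])
qed

end
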